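(* Let $d \ge 1$ and $r \ge 0$ with $m := d+1-2r \ge 0$. Let $\ell_j(x,y) = \alpha_jx+\beta_jy$, $1\le j\le m$, be fixed, pairwise non-proportional linear forms. Then a general binary form $p \in H_d(\mathbb{C}^2)$ can be written uniquely as $$p(x,y) = \sum_{j=1}^m t_j\,\ell_j(x,y)^d + \sum_{k=1}^r (t_{k1}x + t_{k2}y)^d$$ with $t_j, t_{k1}, t_{k2}\in\mathbb{C}$. Uniqueness is meant up to permutation of the $r$ summands of the second sum and up to replacing a linear form $t_{k1}x+t_{k2}y$ by $\zeta(t_{k1}x+t_{k2}y)$ with $\zeta^d=1$.
   Context: $H_d(\mathbb{C}^n)$ denotes the complex vector space of homogeneous polynomials of degree $d$ in $n$ variables. "A general $p$ has property P" means P holds for all $p$ in a nonempty Zariski-open subset of $H_d(\mathbb{C}^n)$. *)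

theory Defs
  imports Complex_Main
begin

inductive_set polyfun :: "nat \<Rightarrow> ((nat \<Rightarrow> complex) \<Rightarrow> complex) set" for n :: nat where
  const: "(\<lambda>v. a) \<in> polyfun n"
| var: "i < n \<Longrightarrow> (\<lambda>v. v i) \<in> polyfun n"
| add: "f \<in> polyfun n \<Longrightarrow> g \<in> polyfun n \<Longrightarrow> (\<lambda>v. f v + g v) \<in> polyfun n"
| mult: "f \<in> polyfun n \<Longrightarrow> g \<in> polyfun n \<Longrightarrow> (\<lambda>v. f v * g v) \<in> polyfun n"

definition binform :: "nat \<Rightarrow> (nat \<Rightarrow> complex) \<Rightarrow> complex \<Rightarrow> complex \<Rightarrow> complex" where
  "binform d c x y = (\<Sum>i\<le>d. c i * x ^ i * y ^ (d - i))"

text \<open>A general form in H_d(C^2) has property P: P holds on a nonempty Zariski open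
  subset of the coefficient space C^(d+1); equivalently P holds outside the zero set of
  some polynomial in the d+1 coefficients which does not vanish identically.\<close>
definition general_binform :: "nat \<Rightarrow> ((nat \<Rightarrow> complex) \<Rightarrow> bool) \<Rightarrow> bool" where
  "general_binform d P \<longleftrightarrow>
     (\<exists>F \<in> polyfun (d + 1). (\<exists>c. F c \<noteq> 0) \<and> (\<forall>c. F c \<noteq> 0 \<longrightarrow> P c))"

definition proportional :: "complex \<times> complex \<Rightarrow> complex \<times> complex \<Rightarrow> bool" where
  "proportional u w \<longleftrightarrow>
     (\<exists>a. fst u = a * fst w \<and> snd u = a * snd w) \<or> (\<exists>a. fst w = a * fst u \<and> snd w = a * snd u)"

definition waring_rep ::
  "nat \<Rightarrow> nat \<Rightarrow> (nat \<Rightarrow> complex) \<Rightarrow> (nat \<Rightarrow> complex) \<Rightarrow> (nat \<Rightarrow> complex)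
   \<Rightarrow> (nat \<Rightarrow> complex) \<Rightarrow> (nat \<Rightarrow> complex) \<Rightarrow> (nat \<Rightarrow> complex) \<Rightarrow> bool" where
  "waring_rep d r \<alpha> \<beta> c t s1 s2 \<longleftrightarrow>
     (\<forall>x y. binform d c x y =
        (\<Sum>j=1..d + 1 - 2 * r. t j * (\<alpha> j * x + \<beta> j * y) ^ d)
        + (\<Sum>k=1..r. (s1 k * x + s2 k * y) ^ d))"

end

theory Submission imports Defs "Subresultants.Subresultant_Gcd" "HOL-Computational_Algebra.Fundamental_Theorem_Algebra" "HOL-Computational_Algebra.Field_as_Ring" begin


lemma pf_const[intro,simp]: "(\<lambda>v. a) \<in> polyfun N"
  by (rule polyfun.const)

lemma pf_var[intro]: "i < N \<Longrightarrow> (\<lambda>v. v i) \<in> polyfun N"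
  by (rule polyfun.var)

lemma pf_add[intro]: "f \<in> polyfun N \<Longrightarrow> g \<in> polyfun N \<Longrightarrow> (\<lambda>v. f v + g v) \<in> polyfun N"
  by (rule polyfun.add)

lemma pf_mult[intro]: "f \<in> polyfun N \<Longrightarrow> g \<in> polyfun N \<Longrightarrow> (\<lambda>v. f v * g v) \<in> polyfun N"
  by (rule polyfun.mult)

lemma pf_sum:
  assumes "\<And>x. x \<in> S \<Longrightarrow> (\<lambda>v. f x v) \<in> polyfun N"
  shows "(\<lambda>v. \<Sum>x\<in>S. f x v) \<in> polyfun N"
proof (cases "finite S")
  case True
  then show ?thesis using assms
  proof (induction S rule: finite_induct)
    case empty then show ?case by simp
  next
    case (insert x F)
    have "(\<lambda>v. f x v + (\<Sum>x\<in>F. f x v)) \<in> polyfun N"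
      using insert by (intro pf_add) auto
    then show ?case using insert by simp
  qed
qed simp

lemma pf_prod:
  assumes "\<And>x. x \<in> S \<Longrightarrow> (\<lambda>v. f x v) \<in> polyfun N"
  shows "(\<lambda>v. \<Prod>x\<in>S. f x v) \<in> polyfun N"
proof (cases "finite S")
  case True
  then show ?thesis using assms
  proof (induction S rule: finite_induct)
    case empty then show ?case by simp
  next
    case (insert x F)
    have "(\<lambda>v. f x v * (\<Prod>x\<in>F. f x v)) \<in> polyfun N"
      using insert by (intro pf_mult) auto
    then show ?case using insert by simp
  qed
qed simp

lemma pf_local: "F \<in> polyfun N \<Longrightarrow> (\<And>i. i < N \<Longrightarrow> v i = v' i) \<Longrightarrow> F v = F v'"
  by (induction F rule: polyfun.induct) auto

lemma pf_comp:
  assumes "F \<in> polyfun N" and "\<And>i. i < N \<Longrightarrow> (\<lambda>v. T v i) \<in> polyfun N'"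
  shows "(\<lambda>v. F (T v)) \<in> polyfun N'"
  using assms by (induction F rule: polyfun.induct) auto

lemma pf_det:
  assumes "\<And>c. B c \<in> carrier_mat k k"
    and "\<And>i j. i < k \<Longrightarrow> j < k \<Longrightarrow> (\<lambda>c. B c $$ (i,j)) \<in> polyfun N"
  shows "(\<lambda>c. det (B c)) \<in> polyfun N"
proof -
  have "(\<lambda>c. \<Sum>p \<in> {p. p permutes {0..<k}}. signof p * (\<Prod>i = 0..<k. B c $$ (i, p i))) \<in> polyfun N"
  proof (rule pf_sum)
    fix p assume p: "p \<in> {p. p permutes {0..<k}}"
    have "(\<lambda>c. \<Prod>i = 0..<k. B c $$ (i, p i)) \<in> polyfun N"
    proof (rule pf_prod)
      fix i assume i: "i \<in> {0..<k}"
      then have "p i < k" using p permutes_in_image by fastforce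
      then show "(\<lambda>c. B c $$ (i, p i)) \<in> polyfun N" using assms(2) i by auto
    qed
    then show "(\<lambda>c. signof p * (\<Prod>i = 0..<k. B c $$ (i, p i))) \<in> polyfun N"
      by (intro pf_mult) auto
  qed
  then show ?thesis using det_def'[OF assms(1)] by simp
qed



definition hev :: "nat \<Rightarrow> complex poly \<Rightarrow> complex \<Rightarrow> complex \<Rightarrow> complex" where
  "hev k p a b = (\<Sum>i\<le>k. coeff p i * a ^ i * b ^ (k - i))"

lemma poly_le_deg: "degree (p::complex poly) \<le> k \<Longrightarrow> poly p x = (\<Sum>i\<le>k. coeff p i * x ^ i)"
proof -
  assume h: "degree p \<le> k"
  have "poly p x = (\<Sum>i\<le>degree p. coeff p i * x ^ i)" by (rule Polynomial.poly_altdef)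
  also have "\<dots> = (\<Sum>i\<le>k. coeff p i * x ^ i)"
    using h by (intro sum.mono_neutral_left) (auto simp: coeff_eq_0)
  finally show ?thesis .
qed

lemma hev_nz: assumes "degree p \<le> k" "b \<noteq> 0"
  shows "hev k p a b = b ^ k * poly p (a / b)"
proof -
  have "b ^ k * poly p (a / b) = (\<Sum>i\<le>k. b ^ k * (coeff p i * (a / b) ^ i))"
    by (simp add: poly_le_deg[OF assms(1)] sum_distrib_left)
  also have "\<dots> = (\<Sum>i\<le>k. coeff p i * a ^ i * b ^ (k - i))"
  proof (intro sum.cong refl)
    fix i assume "i \<in> {..k}"
    then have "b ^ k = b ^ i * b ^ (k - i)" by (simp add: power_add[symmetric])
    then show "b ^ k * (coeff p i * (a / b) ^ i) = coeff p i * a ^ i * b ^ (k - i)"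
      using assms(2) by (simp add: power_divide field_simps)
  qed
  finally show ?thesis unfolding hev_def by simp
qed

lemma hev_b0: "hev k p a 0 = coeff p k * a ^ k"
proof -
  have "hev k p a 0 = (\<Sum>i\<in>{k}. coeff p i * a ^ i * 0 ^ (k - i))"
    unfolding hev_def by (intro sum.mono_neutral_right) auto
  then show ?thesis by simp
qed

lemma coeff_mult_top:
  assumes "degree p \<le> k1" "degree q \<le> k2"
  shows "coeff (p * q) (k1 + k2) = coeff p k1 * coeff q k2"
proof -
  have "coeff (p * q) (k1 + k2) = (\<Sum>i\<le>k1+k2. coeff p i * coeff q (k1 + k2 - i))"
    by (rule coeff_mult)
  also have "\<dots> = (\<Sum>i\<in>{k1}. coeff p i * coeff q (k1 + k2 - i))"
  proof (rule sum.mono_neutral_right)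
    show "\<forall>i\<in>{..k1 + k2} - {k1}. coeff p i * coeff q (k1 + k2 - i) = 0"
    proof
      fix i assume "i \<in> {..k1 + k2} - {k1}"
      then have "i < k1 \<or> i > k1" by auto
      then show "coeff p i * coeff q (k1 + k2 - i) = 0"
        using assms by (auto simp: coeff_eq_0)
    qed
  qed auto
  finally show ?thesis by simp
qed

lemma hev_mult:
  assumes "degree p \<le> k1" "degree q \<le> k2"
  shows "hev (k1 + k2) (p * q) a b = hev k1 p a b * hev k2 q a b"
proof (cases "b = 0")
  case True
  then show ?thesis using coeff_mult_top[OF assms] by (simp add: hev_b0 power_add)
next
  case False
  have "degree (p * q) \<le> k1 + k2" using assms degree_mult_le[of p q] by linarith
  then show ?thesis using False assms by (simp add: hev_nz power_add)
qed

lemma hev_one: "hev k 1 a b = b ^ k"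
proof -
  have "hev k 1 a b = (\<Sum>i\<in>{0}. coeff 1 i * a ^ i * b ^ (k - i))"
    unfolding hev_def by (intro sum.mono_neutral_right) (auto simp: coeff_1)
  then show ?thesis by simp
qed

lemma hev_lin: "hev 1 [:-a', b':] a b = b' * a - a' * b"
  unfolding hev_def by (simp add: numeral_2_eq_2)

lemma hev_scale: "hev k p (\<mu> * a) (\<mu> * b) = \<mu> ^ k * hev k p a b"
  unfolding hev_def sum_distrib_left
proof (intro sum.cong refl)
  fix i assume "i \<in> {..k}"
  then have "\<mu> ^ k = \<mu> ^ i * \<mu> ^ (k - i)" by (simp add: power_add[symmetric])
  then show "coeff p i * (\<mu> * a) ^ i * (\<mu> * b) ^ (k - i) = \<mu> ^ k * (coeff p i * a ^ i * b ^ (k - i))"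
    by (simp add: power_mult_distrib)
qed

lemma hev_00: "k \<ge> 1 \<Longrightarrow> hev k p 0 0 = 0"
  unfolding hev_def by (intro sum.neutral) auto

lemma hev_prod:
  assumes "finite S" "\<And>x. x \<in> S \<Longrightarrow> degree (f x) \<le> 1"
  shows "hev (card S) (\<Prod>x\<in>S. f x) a b = (\<Prod>x\<in>S. hev 1 (f x) a b)
         \<and> degree (\<Prod>x\<in>S. f x) \<le> card S"
  using assms
proof (induction S rule: finite_induct)
  case empty then show ?case by (simp add: hev_one)
next
  case (insert x F)
  then have IH: "hev (card F) (prod f F) a b = (\<Prod>x\<in>F. hev 1 (f x) a b)" "degree (prod f F) \<le> card F"
    by auto
  have dx: "degree (f x) \<le> 1" using insert by auto
  have "hev (1 + card F) (f x * prod f F) a b = hev 1 (f x) a b * hev (card F) (prod f F) a b"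
    by (rule hev_mult[OF dx IH(2)])
  moreover have "degree (f x * prod f F) \<le> 1 + card F"
    using dx IH(2) degree_mult_le[of "f x" "prod f F"] by linarith
  ultimately show ?case using insert IH by simp
qed

lemma hev_pad:
  assumes "degree p \<le> k" "k \<le> K"
  shows "hev K p a b = hev k p a b * b ^ (K - k)"
  using hev_mult[OF assms(1), of 1 "K - k" a b] assms by (simp add: hev_one)



definition mom :: "nat \<Rightarrow> nat \<Rightarrow> nat \<Rightarrow> (nat \<Rightarrow> complex) \<Rightarrow> (nat \<Rightarrow> complex) \<Rightarrow> (nat \<Rightarrow> complex)
   \<Rightarrow> (nat \<Rightarrow> complex) \<Rightarrow> (nat \<Rightarrow> complex) \<Rightarrow> nat \<Rightarrow> complex" where
  "mom d m r t \<alpha> \<beta> s1 s2 i = (\<Sum>j=1..m. t j * \<alpha> j ^ i * \<beta> j ^ (d - i)) + (\<Sum>k=1..r. s1 k ^ i * s2 k ^ (d - i))"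

lemma binform_eq_iff: "(\<forall>x y. binform d c x y = binform d c' x y) \<longleftrightarrow> (\<forall>i\<le>d. c i = c' i)"
proof
  assume h: "\<forall>x y. binform d c x y = binform d c' x y"
  define P where "P c = (\<Sum>i\<le>d. monom (c i) i :: complex poly)" for c
  have cP: "coeff (P c) j = (if j \<le> d then c j else 0)" for c j
    unfolding P_def by (simp add: coeff_sum coeff_monom)
  have pP: "poly (P c) x = binform d c x 1" for c x
    unfolding P_def binform_def by (simp add: poly_sum poly_monom)
  have "poly (P c) = poly (P c')" using h pP by auto
  then have "P c = P c'" using poly_eq_poly_eq_iff by blast
  then show "\<forall>i\<le>d. c i = c' i" using cP by metis
qed (simp add: binform_def)

lemma pow_expand: "(a * x + b * y) ^ d = (\<Sum>i\<le>d. of_nat (d choose i) * a ^ i * b ^ (d - i) * x ^ i * y ^ (d - i) :: complex)"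
  unfolding binomial_ring by (simp add: power_mult_distrib mult_ac)

lemma rep_iff: "waring_rep d r \<alpha> \<beta> c t s1 s2 \<longleftrightarrow>
   (\<forall>i\<le>d. c i = of_nat (d choose i) * mom d (d + 1 - 2 * r) r t \<alpha> \<beta> s1 s2 i)"
proof -
  let ?m = "d + 1 - 2 * r"
  have "(\<Sum>j=1..?m. t j * (\<alpha> j * x + \<beta> j * y) ^ d) + (\<Sum>k=1..r. (s1 k * x + s2 k * y) ^ d)
        = binform d (\<lambda>i. of_nat (d choose i) * mom d ?m r t \<alpha> \<beta> s1 s2 i) x y" for x y
    unfolding binform_def mom_def pow_expand
    apply (simp add: sum_distrib_left sum_distrib_right distrib_left distrib_right sum.distrib mult_ac)
    by (simp add: sum.swap[of _ "{..d}"])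
  then show ?thesis unfolding waring_rep_def using binform_eq_iff by presburger
qed

lemma functional:
  assumes "degree \<phi> \<le> d"
  shows "(\<Sum>i\<le>d. coeff \<phi> i * mom d m r t \<alpha> \<beta> s1 s2 i)
     = (\<Sum>j=1..m. t j * hev d \<phi> (\<alpha> j) (\<beta> j)) + (\<Sum>k=1..r. hev d \<phi> (s1 k) (s2 k))"
  unfolding mom_def hev_def
  apply (simp add: sum_distrib_left distrib_left sum.distrib mult_ac)
  by (simp add: sum.swap[of _ "{..d}"])



lemma poly_zero_many_roots:
  fixes q :: "complex poly"
  assumes "finite S" "card S > degree q" "\<And>x. x \<in> S \<Longrightarrow> poly q x = 0"
  shows "q = 0"
proof (rule ccontr)
  assume q: "q \<noteq> 0"
  have "S \<subseteq> {x. poly q x = 0}" using assms by auto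
  then have "card S \<le> card {x. poly q x = 0}"
    using poly_roots_finite[OF q] by (intro card_mono) auto
  then show False using card_poly_roots_bound[OF q] assms(2) by linarith
qed

definition lag :: "complex set \<Rightarrow> complex \<Rightarrow> complex poly" where
  "lag R \<zeta> = (\<Prod>x\<in>R - {\<zeta>}. [:-x, 1:])"

lemma lag_props:
  assumes "finite R" "\<zeta> \<in> R"
  shows "degree (lag R \<zeta>) = card R - 1"
    and "poly (lag R \<zeta>) \<zeta> \<noteq> 0"
    and "\<And>x. x \<in> R \<Longrightarrow> x \<noteq> \<zeta> \<Longrightarrow> poly (lag R \<zeta>) x = 0"
proof -
  have "degree (lag R \<zeta>) = (\<Sum>x\<in>R - {\<zeta>}. degree [:-x, 1::complex:])"
    unfolding lag_def by (intro degree_prod_eq_sum_degree) auto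
  then show "degree (lag R \<zeta>) = card R - 1" using assms by (simp add: card_Diff_singleton)
  show "poly (lag R \<zeta>) \<zeta> \<noteq> 0" unfolding lag_def poly_prod using assms by auto
  show "\<And>x. x \<in> R \<Longrightarrow> x \<noteq> \<zeta> \<Longrightarrow> poly (lag R \<zeta>) x = 0"
    unfolding lag_def poly_prod using assms by (auto intro: prod_zero)
qed

lemma affine_functional:
  fixes q :: "complex poly"
  assumes "degree q \<le> K" "finite R"
  shows "(\<Sum>e\<le>K. coeff q e * (\<Sum>\<zeta>\<in>R. w \<zeta> * \<zeta> ^ (i + e))) = (\<Sum>\<zeta>\<in>R. w \<zeta> * \<zeta> ^ i * poly q \<zeta>)"
proof -
  have "(\<Sum>e\<le>K. coeff q e * (\<Sum>\<zeta>\<in>R. w \<zeta> * \<zeta> ^ (i + e))) = (\<Sum>\<zeta>\<in>R. w \<zeta> * \<zeta> ^ i * (\<Sum>e\<le>K. coeff q e * \<zeta> ^ e))"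
    by (simp add: sum_distrib_left sum_distrib_right power_add mult_ac sum.swap[of _ "{..K}"])
  then show ?thesis by (simp add: poly_le_deg[OF assms(1)])
qed

lemma vander_inj:
  fixes R :: "complex set"
  assumes "finite R" "card R = N" "\<And>i. i < N \<Longrightarrow> (\<Sum>\<zeta>\<in>R. w \<zeta> * \<zeta> ^ i) = 0" "\<zeta>0 \<in> R"
  shows "w \<zeta>0 = 0"
proof -
  have N: "N \<ge> 1" using assms card_0_eq by fastforce
  have dl: "degree (lag R \<zeta>0) \<le> N - 1" using lag_props(1)[OF assms(1,4)] assms by simp
  have "(\<Sum>e\<le>N-1. coeff (lag R \<zeta>0) e * (\<Sum>\<zeta>\<in>R. w \<zeta> * \<zeta> ^ (0 + e))) = (\<Sum>\<zeta>\<in>R. w \<zeta> * \<zeta> ^ 0 * poly (lag R \<zeta>0) \<zeta>)"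
    by (rule affine_functional[OF dl assms(1)])
  moreover have "(\<Sum>e\<le>N-1. coeff (lag R \<zeta>0) e * (\<Sum>\<zeta>\<in>R. w \<zeta> * \<zeta> ^ (0 + e))) = 0"
    using assms(3) N by (intro sum.neutral) auto
  moreover have "(\<Sum>\<zeta>\<in>R. w \<zeta> * \<zeta> ^ 0 * poly (lag R \<zeta>0) \<zeta>) = (\<Sum>\<zeta>\<in>{\<zeta>0}. w \<zeta> * \<zeta> ^ 0 * poly (lag R \<zeta>0) \<zeta>)"
    using assms lag_props(3)[OF assms(1,4)] by (intro sum.mono_neutral_right) auto
  ultimately show ?thesis using lag_props(2)[OF assms(1,4)] by simp
qed

lemma vander_solve:
  fixes R :: "complex set"
  assumes "finite R" "card R = N"
  shows "\<exists>w. \<forall>i<N. u i = (\<Sum>\<zeta>\<in>R. w \<zeta> * \<zeta> ^ i)"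
proof -
  define w where "w \<zeta> = (\<Sum>e<N. coeff (lag R \<zeta>) e * u e) / poly (lag R \<zeta>) \<zeta>" for \<zeta>
  have key: "(\<Sum>\<zeta>\<in>R. smult (\<zeta> ^ i / poly (lag R \<zeta>) \<zeta>) (lag R \<zeta>)) = monom 1 i" if i: "i < N" for i
  proof -
    let ?Q = "(\<Sum>\<zeta>\<in>R. smult (\<zeta> ^ i / poly (lag R \<zeta>) \<zeta>) (lag R \<zeta>)) - monom 1 i"
    have "degree ?Q < N"
    proof -
      have "degree (\<Sum>\<zeta>\<in>R. smult (\<zeta> ^ i / poly (lag R \<zeta>) \<zeta>) (lag R \<zeta>)) \<le> N - 1"
        using lag_props(1)[OF assms(1)] assms
        by (intro degree_sum_le) (auto intro: order.trans[OF degree_smult_le])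
      moreover have "degree (monom (1::complex) i) \<le> N - 1" using i by (simp add: degree_monom_eq)
      ultimately have "degree ?Q \<le> N - 1" by (intro degree_diff_le) auto
      then show ?thesis using i by linarith
    qed
    moreover have "poly ?Q x = 0" if x: "x \<in> R" for x
    proof -
      have "poly (\<Sum>\<zeta>\<in>R. smult (\<zeta> ^ i / poly (lag R \<zeta>) \<zeta>) (lag R \<zeta>)) x
          = (\<Sum>\<zeta>\<in>R. \<zeta> ^ i / poly (lag R \<zeta>) \<zeta> * poly (lag R \<zeta>) x)" by (simp add: poly_sum)
      also have "\<dots> = (\<Sum>\<zeta>\<in>{x}. \<zeta> ^ i / poly (lag R \<zeta>) \<zeta> * poly (lag R \<zeta>) x)"
        using assms x lag_props(3)[OF assms(1)] by (intro sum.mono_neutral_right) auto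
      also have "\<dots> = x ^ i" using lag_props(2)[OF assms(1) x] by simp
      finally show ?thesis by (simp add: poly_monom)
    qed
    ultimately have "?Q = 0" using poly_zero_many_roots[of R ?Q] assms by auto
    then show ?thesis by simp
  qed
  have "u i = (\<Sum>\<zeta>\<in>R. w \<zeta> * \<zeta> ^ i)" if i: "i < N" for i
  proof -
    have "(\<Sum>\<zeta>\<in>R. w \<zeta> * \<zeta> ^ i) = (\<Sum>e<N. u e * (\<Sum>\<zeta>\<in>R. \<zeta> ^ i / poly (lag R \<zeta>) \<zeta> * coeff (lag R \<zeta>) e))"
      unfolding w_def by (simp add: sum_divide_distrib sum_distrib_left sum_distrib_right mult_ac sum.swap[of _ R])
    also have "\<dots> = (\<Sum>e<N. u e * coeff (monom 1 i) e)"
      unfolding key[OF i, symmetric] by (simp add: coeff_sum)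
    also have "\<dots> = (\<Sum>e\<in>{i}. u e * coeff (monom 1 i) e)"
      using i by (intro sum.mono_neutral_right) (auto simp: coeff_monom)
    finally show ?thesis by (simp add: coeff_monom)
  qed
  then show ?thesis by blast
qed

lemma recurrence_zero:
  fixes G :: "complex poly"
  assumes "coeff G n \<noteq> 0" "degree G \<le> n"
    and "\<And>i. i < r \<Longrightarrow> (\<Sum>e\<le>n. coeff G e * D (i + e)) = 0"
    and "\<And>i. i < n \<Longrightarrow> D i = 0"
  shows "i < n + r \<Longrightarrow> D i = 0"
proof (induction i rule: less_induct)
  case (less i)
  show ?case
  proof (cases "i < n")
    case True then show ?thesis using assms(4) by simp
  next
    case False
    define i' where "i' = i - n"
    have i': "i' < r" "i = i' + n" using False less.prems unfolding i'_def by auto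
    have "0 = (\<Sum>e\<le>n. coeff G e * D (i' + e))" using assms(3)[OF i'(1)] by simp
    also have "\<dots> = (\<Sum>e\<in>{n}. coeff G e * D (i' + e))"
    proof (intro sum.mono_neutral_right)
      show "\<forall>e\<in>{..n} - {n}. coeff G e * D (i' + e) = 0"
        using less.IH i' less.prems by auto
    qed auto
    finally show ?thesis using i' assms(1) by simp
  qed
qed



lemma res_sqf:
  fixes p :: "complex poly"
  assumes "p \<noteq> 0" "resultant p (pderiv p) \<noteq> 0"
  shows "rsquarefree p"
  unfolding rsquarefree_roots
proof (intro allI notI)
  fix a assume a: "poly p a = 0 \<and> poly (pderiv p) a = 0"
  then have "[:-a,1:] dvd p" "[:-a,1:] dvd pderiv p" by (auto simp: poly_eq_0_iff_dvd)
  then have d: "[:-a,1:] dvd gcd p (pderiv p)" by auto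
  have "gcd p (pderiv p) \<noteq> 0" using assms(1) by auto
  then have "degree [:-a,1::complex:] \<le> degree (gcd p (pderiv p))" using d dvd_imp_degree_le by blast
  then have "degree (gcd p (pderiv p)) \<noteq> 0" by simp
  then show False using assms(2) resultant_0_gcd by blast
qed

lemma sqf_res:
  fixes p :: "complex poly"
  assumes "rsquarefree p"
  shows "resultant p (pderiv p) \<noteq> 0"
proof
  assume "resultant p (pderiv p) = 0"
  then have "degree (gcd p (pderiv p)) \<noteq> 0" using resultant_0_gcd by blast
  then have "\<not> constant (poly (gcd p (pderiv p)))" by (simp add: constant_degree)
  then obtain a where "poly (gcd p (pderiv p)) a = 0" using fundamental_theorem_of_algebra by blast
  then have "[:-a,1:] dvd gcd p (pderiv p)" by (simp add: poly_eq_0_iff_dvd)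
  then have "[:-a,1:] dvd p" "[:-a,1:] dvd pderiv p" using dvd_trans by blast+
  then have "poly p a = 0 \<and> poly (pderiv p) a = 0" by (simp add: poly_eq_0_iff_dvd)
  then show False using assms rsquarefree_roots by blast
qed

lemma sqf_prod:
  fixes R :: "complex set"
  assumes "finite R" "c \<noteq> 0"
  shows "rsquarefree (smult c (\<Prod>x\<in>R. [:-x,1:]))"
  unfolding rsquarefree_roots
proof (intro allI notI)
  fix a assume a: "poly (smult c (\<Prod>x\<in>R. [:-x,1:])) a = 0 \<and> poly (pderiv (smult c (\<Prod>x\<in>R. [:-x,1:]))) a = 0"
  then have aR: "a \<in> R" using assms by (auto simp: poly_prod prod_zero_iff)
  define Q where "Q = (\<Prod>x\<in>R - {a}. [:-x,1::complex:])"
  have pe: "(\<Prod>x\<in>R. [:-x,1:]) = [:-a,1:] * Q"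
    unfolding Q_def using aR assms(1) by (simp add: prod.remove)
  have "poly Q a \<noteq> 0" unfolding Q_def poly_prod using assms by auto
  moreover have "poly (pderiv (smult c (\<Prod>x\<in>R. [:-x,1:]))) a = c * poly Q a"
  proof -
    have "pderiv ([:-a,1:] * Q) = [:-a,1:] * pderiv Q + Q * pderiv [:-a,1:]" by (rule pderiv_mult)
    moreover have "pderiv [:-a,1::complex:] = 1" by (simp add: pderiv_pCons)
    ultimately show ?thesis unfolding pe pderiv_smult by simp
  qed
  ultimately show False using a assms(2) by simp
qed



definition vpol :: "nat \<Rightarrow> complex vec \<Rightarrow> complex poly" where
  "vpol r x = (\<Sum>e<r+1. monom (x $ e) e)"

lemma coeff_vpol: "coeff (vpol r x) e = (if e < r + 1 then x $ e else 0)"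
  unfolding vpol_def by (simp add: coeff_sum coeff_monom)

lemma degree_vpol: "degree (vpol r x) \<le> r"
  by (rule degree_le) (auto simp: coeff_vpol)

lemma vpol_vec: "degree q \<le> r \<Longrightarrow> vpol r (vec (r+1) (coeff q)) = q"
  by (rule poly_eqI) (auto simp: coeff_vpol coeff_eq_0)

lemma pf_if: "(P \<Longrightarrow> f \<in> polyfun N) \<Longrightarrow> (\<not> P \<Longrightarrow> g \<in> polyfun N) \<Longrightarrow> (\<lambda>c. if P then f c else g c) \<in> polyfun N"
  by (cases P) auto

locale wsetup =
  fixes d r :: nat and \<alpha> \<beta> :: "nat \<Rightarrow> complex"
  assumes d1: "d \<ge> 1" and r2: "2 * r \<le> d + 1"
    and bnz: "\<And>j. j \<in> {1..d + 1 - 2 * r} \<Longrightarrow> \<beta> j \<noteq> 0"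
    and zinj: "inj_on (\<lambda>j. \<alpha> j / \<beta> j) {1..d + 1 - 2 * r}"
begin

definition "mm = d + 1 - 2 * r"
definition "nn = d + 1 - r"

lemma nn_mm: "nn = mm + r" "nn + r = d + 1" "r \<le> nn" "nn \<ge> 1"
  using r2 d1 unfolding nn_def mm_def by auto

definition z :: "nat \<Rightarrow> complex" where "z j = \<alpha> j / \<beta> j"
definition "ZZ = z ` {1..mm}"

lemma ZZ: "finite ZZ" "card ZZ = mm"
proof -
  show "finite ZZ" unfolding ZZ_def by simp
  have "card ZZ = card {1..mm}" unfolding ZZ_def z_def mm_def by (rule card_image[OF zinj])
  then show "card ZZ = mm" by simp
qed

definition g0 :: "complex poly" where "g0 = (\<Prod>x\<in>ZZ. [:-x, 1:])"

lemma g0: "degree g0 = mm" "poly g0 x = 0 \<longleftrightarrow> x \<in> ZZ"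
proof -
  have "degree g0 = (\<Sum>x\<in>ZZ. degree [:-x, 1::complex:])"
    unfolding g0_def by (intro degree_prod_eq_sum_degree) auto
  then show "degree g0 = mm" using ZZ by simp
  show "poly g0 x = 0 \<longleftrightarrow> x \<in> ZZ" unfolding g0_def poly_prod using ZZ by (auto simp: prod_zero_iff)
qed

lemma g0_nz: "g0 \<noteq> 0" using g0(2) ZZ(1) by (metis ex_new_if_finite infinite_UNIV_char_0 poly_0)

definition uu :: "(nat \<Rightarrow> complex) \<Rightarrow> nat \<Rightarrow> complex" where
  "uu c i = c i / of_nat (d choose i)"

definition hk :: "(nat \<Rightarrow> complex) \<Rightarrow> complex poly \<Rightarrow> nat \<Rightarrow> complex" where
  "hk c q i = (\<Sum>e\<le>nn. coeff q e * uu c (i + e))"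

definition Amat :: "(nat \<Rightarrow> complex) \<Rightarrow> complex mat" where
  "Amat c = mat (r+1) (r+1) (\<lambda>(i,e). if i < r then hk c (g0 * monom 1 e) i else (if e = r then 1 else 0))"

definition hpol :: "(nat \<Rightarrow> complex) \<Rightarrow> complex poly" where
  "hpol c = vpol r (col (adj_mat (Amat c)) r)"

definition gG :: "(nat \<Rightarrow> complex) \<Rightarrow> complex poly" where
  "gG c = g0 * hpol c"

definition Fpol :: "(nat \<Rightarrow> complex) \<Rightarrow> complex" where
  "Fpol c = det (Amat c) * coeff (gG c) nn * det (sylvester_mat_sub nn (nn - 1) (gG c) (pderiv (gG c)))"

lemma Amat_carrier: "Amat c \<in> carrier_mat (r+1) (r+1)"
  unfolding Amat_def by simp

lemma Amat_dim[simp]: "dim_row (Amat c) = r + 1" "dim_col (Amat c) = r + 1"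
  unfolding Amat_def by simp_all

lemma Amat_mult:
  assumes x: "x \<in> carrier_vec (r+1)" and i: "i < r"
  shows "(Amat c *\<^sub>v x) $ i = hk c (g0 * vpol r x) i"
proof -
  have eq: "(\<Sum>e<r+1. smult (x $ e) (g0 * monom 1 e)) = g0 * vpol r x"
    unfolding vpol_def by (simp add: sum_distrib_left mult_smult_right[symmetric] smult_monom distrib_left del: sum.lessThan_Suc)
  have "(Amat c *\<^sub>v x) $ i = (\<Sum>e<r+1. hk c (g0 * monom 1 e) i * x $ e)"
    using x i unfolding Amat_def by (simp add: scalar_prod_def atLeast0LessThan)
  also have "\<dots> = hk c (\<Sum>e<r+1. smult (x $ e) (g0 * monom 1 e)) i"
    unfolding hk_def
    by (simp add: sum_distrib_left sum_distrib_right coeff_sum mult_ac del: sum.lessThan_Suc) (rule sum.swap)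
  finally show ?thesis unfolding eq .
qed

lemma Amat_last: "x \<in> carrier_vec (r+1) \<Longrightarrow> (Amat c *\<^sub>v x) $ r = x $ r"
  unfolding Amat_def by (simp add: scalar_prod_def if_distrib[of "\<lambda>a. a * _"] cong: if_cong)

lemma K1:
  shows "\<And>i. i < r \<Longrightarrow> hk c (gG c) i = 0"
    and "coeff (hpol c) r = det (Amat c)"
    and "degree (hpol c) \<le> r"
proof -
  let ?A = "Amat c" and ?B = "adj_mat (Amat c)"
  have AB: "?A * ?B = det ?A \<cdot>\<^sub>m 1\<^sub>m (r+1)" using adj_mat(2)[OF Amat_carrier] .
  have Bc: "?B \<in> carrier_mat (r+1) (r+1)" using adj_mat(1)[OF Amat_carrier] .
  have v: "col ?B r \<in> carrier_vec (r+1)" by (rule col_carrier_vec[OF _ Bc]) simp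
  have Av: "?A *\<^sub>v col ?B r = col (det ?A \<cdot>\<^sub>m 1\<^sub>m (r+1)) r"
    using col_mult2[OF Amat_carrier[of c] Bc, of r] AB by simp
  have Avi: "(?A *\<^sub>v col ?B r) $ i = (if i = r then det ?A else 0)" if "i < r + 1" for i
    using that unfolding Av by simp
  show "\<And>i. i < r \<Longrightarrow> hk c (gG c) i = 0"
  proof -
    fix i assume i: "i < r"
    have "hk c (gG c) i = (?A *\<^sub>v col ?B r) $ i"
      unfolding gG_def hpol_def using Amat_mult[OF v i] by simp
    then show "hk c (gG c) i = 0" using Avi[of i] i by simp
  qed
  have "coeff (hpol c) r = col ?B r $ r" unfolding hpol_def by (simp add: coeff_vpol)
  also have "\<dots> = (?A *\<^sub>v col ?B r) $ r" using Amat_last[OF v] by simp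
  finally show "coeff (hpol c) r = det (Amat c)" using Avi[of r] by simp
  show "degree (hpol c) \<le> r" unfolding hpol_def by (rule degree_vpol)
qed

lemma K2:
  assumes "det (Amat c) \<noteq> 0" "degree q \<le> r" "coeff q r = 0" "\<And>i. i < r \<Longrightarrow> hk c (g0 * q) i = 0"
  shows "q = 0"
proof -
  define x where "x = vec (r+1) (coeff q)"
  have xc: "x \<in> carrier_vec (r+1)" unfolding x_def by simp
  have vx: "vpol r x = q" unfolding x_def by (rule vpol_vec[OF assms(2)])
  have "Amat c *\<^sub>v x = 0\<^sub>v (r+1)"
  proof (rule eq_vecI)
    fix i assume "i < dim_vec (0\<^sub>v (r+1) :: complex vec)"
    then have i: "i < r + 1" by simp
    show "(Amat c *\<^sub>v x) $ i = 0\<^sub>v (r+1) $ i"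
    proof (cases "i < r")
      case True then show ?thesis using Amat_mult[OF xc True] vx assms(4) i by simp
    next
      case False then have "i = r" using i by simp
      then show ?thesis using Amat_last[OF xc] assms(3) unfolding x_def by simp
    qed
  qed (simp add: Amat_def)
  then have "x = 0\<^sub>v (r+1)" using det_0_iff_vec_prod_zero[OF Amat_carrier] assms(1) xc by blast
  then show "q = 0" using vx by (simp add: vpol_def)
qed

lemma hk_moments:
  assumes "finite R" "\<And>i. i \<le> d \<Longrightarrow> uu c i = (\<Sum>\<zeta>\<in>R. w \<zeta> * \<zeta> ^ i)" "degree q \<le> nn" "i < r"
  shows "hk c q i = (\<Sum>\<zeta>\<in>R. w \<zeta> * \<zeta> ^ i * poly q \<zeta>)"
proof -
  have "hk c q i = (\<Sum>e\<le>nn. coeff q e * (\<Sum>\<zeta>\<in>R. w \<zeta> * \<zeta> ^ (i + e)))"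
    unfolding hk_def using assms(2,4) nn_mm by (intro sum.cong refl) auto
  also have "\<dots> = (\<Sum>\<zeta>\<in>R. w \<zeta> * \<zeta> ^ i * poly q \<zeta>)" by (rule affine_functional[OF assms(3,1)])
  finally show ?thesis .
qed

lemma pf_uu: "k \<le> d \<Longrightarrow> (\<lambda>c. uu c k) \<in> polyfun (Suc d)"
  unfolding uu_def divide_inverse by (intro pf_mult pf_var) auto

lemma pf_hk: "i < r \<Longrightarrow> (\<lambda>c. hk c q i) \<in> polyfun (Suc d)"
  unfolding hk_def using nn_mm by (intro pf_sum pf_mult pf_uu) auto

lemma pf_Amat: "i < r + 1 \<Longrightarrow> j < r + 1 \<Longrightarrow> (\<lambda>c. Amat c $$ (i,j)) \<in> polyfun (Suc d)"
  unfolding Amat_def by (auto intro!: pf_if pf_hk)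

lemma pf_detA: "(\<lambda>c. det (Amat c)) \<in> polyfun (Suc d)"
  by (rule pf_det[OF Amat_carrier pf_Amat])

lemma pf_hpol: "(\<lambda>c. coeff (hpol c) e) \<in> polyfun (Suc d)"
proof (cases "e < r + 1")
  case True
  have "coeff (hpol c) e = (- 1) ^ (r + e) * det (mat_delete (Amat c) r e)" for c
    unfolding hpol_def coeff_vpol using True Amat_carrier[of c]
    by (simp add: adj_mat_def cofactor_def)
  moreover have "(\<lambda>c. det (mat_delete (Amat c) r e)) \<in> polyfun (Suc d)"
  proof (rule pf_det)
    show "\<And>c. mat_delete (Amat c) r e \<in> carrier_mat r r"
      using mat_delete_carrier[OF Amat_carrier] by fastforce
    fix i j assume "i < r" "j < r"
    then show "(\<lambda>c. mat_delete (Amat c) r e $$ (i, j)) \<in> polyfun (Suc d)"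
    proof -
      have "mat_delete (Amat c) r e $$ (i, j) = Amat c $$ (if i < r then i else Suc i, if j < e then j else Suc j)" for c
        unfolding mat_delete_def using \<open>i < r\<close> \<open>j < r\<close> by simp
      moreover have "(\<lambda>c. Amat c $$ (if i < r then i else Suc i, if j < e then j else Suc j)) \<in> polyfun (Suc d)"
        by (rule pf_Amat) (use \<open>i < r\<close> \<open>j < r\<close> in auto)
      ultimately show ?thesis by simp
    qed
  qed
  ultimately show ?thesis by (auto intro!: pf_mult)
next
  case False then show ?thesis unfolding hpol_def coeff_vpol by simp
qed

lemma pf_gG: "(\<lambda>c. coeff (gG c) k) \<in> polyfun (Suc d)"
  unfolding gG_def coeff_mult by (intro pf_sum pf_mult pf_hpol) auto

lemma pf_dgG: "(\<lambda>c. coeff (pderiv (gG c)) k) \<in> polyfun (Suc d)"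
  unfolding coeff_pderiv by (intro pf_mult pf_gG) auto

lemma pf_Fpol: "Fpol \<in> polyfun (d + 1)"
proof -
  have "(\<lambda>c. det (sylvester_mat_sub nn (nn - 1) (gG c) (pderiv (gG c)))) \<in> polyfun (Suc d)"
  proof (rule pf_det)
    show "\<And>c. sylvester_mat_sub nn (nn - 1) (gG c) (pderiv (gG c)) \<in> carrier_mat (nn + (nn - 1)) (nn + (nn - 1))"
      by (rule sylvester_mat_sub_carrier)
    fix i j assume "i < nn + (nn - 1)" "j < nn + (nn - 1)"
    then show "(\<lambda>c. sylvester_mat_sub nn (nn - 1) (gG c) (pderiv (gG c)) $$ (i, j)) \<in> polyfun (Suc d)"
      unfolding sylvester_mat_sub_def by (simp only: index_mat split) (intro pf_if pf_gG pf_dgG pf_const)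
  qed
  then have "(\<lambda>c. det (Amat c) * coeff (gG c) nn * det (sylvester_mat_sub nn (nn - 1) (gG c) (pderiv (gG c)))) \<in> polyfun (Suc d)"
    by (intro pf_mult pf_detA pf_gG)
  then show ?thesis unfolding Fpol_def[abs_def] by simp
qed

end


context wsetup begin

lemma exist:
  assumes F: "Fpol c \<noteq> 0"
  shows "\<exists>tt Y w. finite Y \<and> card Y = r \<and> Y \<inter> ZZ = {} \<and> (\<forall>y\<in>Y. w y \<noteq> 0) \<and>
     (\<forall>i\<le>d. uu c i = (\<Sum>j=1..mm. tt j * z j ^ i) + (\<Sum>y\<in>Y. w y * y ^ i))"
proof -
  define G where "G = gG c"
  have D: "det (Amat c) \<noteq> 0" and lc: "coeff G nn \<noteq> 0"
    and S: "det (sylvester_mat_sub nn (nn - 1) G (pderiv G)) \<noteq> 0"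
    using F unfolding Fpol_def G_def by auto
  have "degree G \<le> nn" unfolding G_def gG_def
    using degree_mult_le[of g0 "hpol c"] g0(1) K1(3)[of c] nn_mm by linarith
  then have dG: "degree G = nn" using le_degree[OF lc] by simp
  have dG': "degree (pderiv G) = nn - 1" using dG degree_pderiv[of G] by simp
  have Gnz: "G \<noteq> 0" using lc by auto
  have "resultant G (pderiv G) \<noteq> 0" unfolding resultant_sub resultant_sub_def dG dG' using S .
  then have sqf: "rsquarefree G" using res_sqf Gnz by blast
  define R where "R = {x. poly G x = 0}"
  have Rfin: "finite R" unfolding R_def using poly_roots_finite[OF Gnz] .
  have dec: "smult (lead_coeff G) (\<Prod>x\<in>R. [:-x, 1:]) = G"
    unfolding R_def by (rule complex_poly_decompose_rsquarefree[OF sqf])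
  have "degree (\<Prod>x\<in>R. [:-x, 1::complex:]) = (\<Sum>x\<in>R. degree [:-x, 1::complex:])"
    by (intro degree_prod_eq_sum_degree) auto
  then have "degree (\<Prod>x\<in>R. [:-x, 1::complex:]) = card R" by simp
  moreover have "nn = degree (smult (lead_coeff G) (\<Prod>x\<in>R. [:-x, 1::complex:]))" using dec dG by simp
  moreover have "lead_coeff G \<noteq> 0" using Gnz by simp
  ultimately have cR: "card R = nn" by simp
  have ZR: "ZZ \<subseteq> R" unfolding R_def G_def gG_def using g0(2) by auto
  define Y where "Y = R - ZZ"
  have Yfin: "finite Y" unfolding Y_def using Rfin by simp
  have cY: "card Y = r" unfolding Y_def using card_Diff_subset[OF ZZ(1) ZR] cR ZZ(2) nn_mm by simp
  have YZ: "Y \<inter> ZZ = {}" unfolding Y_def by auto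
  obtain w where w: "\<And>i. i < nn \<Longrightarrow> uu c i = (\<Sum>\<zeta>\<in>R. w \<zeta> * \<zeta> ^ i)"
    using vander_solve[OF Rfin cR, of "uu c"] by blast
  define DD where "DD i = uu c i - (\<Sum>\<zeta>\<in>R. w \<zeta> * \<zeta> ^ i)" for i
  have rec: "(\<Sum>e\<le>nn. coeff G e * DD (i + e)) = 0" if i: "i < r" for i
  proof -
    have "(\<Sum>e\<le>nn. coeff G e * DD (i + e)) = hk c G i - (\<Sum>e\<le>nn. coeff G e * (\<Sum>\<zeta>\<in>R. w \<zeta> * \<zeta> ^ (i + e)))"
      unfolding DD_def hk_def by (simp add: right_diff_distrib sum_subtractf)
    also have "hk c G i = 0" unfolding G_def using K1(1)[OF i] .
    also have "(\<Sum>e\<le>nn. coeff G e * (\<Sum>\<zeta>\<in>R. w \<zeta> * \<zeta> ^ (i + e))) = (\<Sum>\<zeta>\<in>R. w \<zeta> * \<zeta> ^ i * poly G \<zeta>)"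
      by (rule affine_functional[OF \<open>degree G \<le> nn\<close> Rfin])
    also have "\<dots> = 0" unfolding R_def by simp
    finally show ?thesis by simp
  qed
  have DD0: "DD i = 0" if "i \<le> d" for i
    using recurrence_zero[of G nn r DD i] lc \<open>degree G \<le> nn\<close> rec w that nn_mm unfolding DD_def by auto
  have uR: "uu c i = (\<Sum>\<zeta>\<in>R. w \<zeta> * \<zeta> ^ i)" if "i \<le> d" for i
    using DD0[OF that] unfolding DD_def by simp
  have Rsplit: "R = ZZ \<union> Y" unfolding Y_def using ZR by auto
  have zsum: "(\<Sum>\<zeta>\<in>ZZ. f \<zeta>) = (\<Sum>j=1..mm. f (z j))" for f :: "complex \<Rightarrow> complex"
    unfolding ZZ_def using zinj unfolding z_def mm_def by (simp add: sum.reindex)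
  have uZY: "uu c i = (\<Sum>j=1..mm. w (z j) * z j ^ i) + (\<Sum>y\<in>Y. w y * y ^ i)" if "i \<le> d" for i
    using uR[OF that] unfolding Rsplit using sum.union_disjoint[OF ZZ(1) Yfin, of "\<lambda>\<zeta>. w \<zeta> * \<zeta> ^ i"] YZ zsum
    by (simp add: Int_commute)
  have wnz: "w y0 \<noteq> 0" if y0: "y0 \<in> Y" for y0
  proof
    assume w0: "w y0 = 0"
    define q where "q = (\<Prod>y\<in>Y - {y0}. [:-y, 1::complex:])"
    have "degree q = (\<Sum>y\<in>Y - {y0}. degree [:-y, 1::complex:])"
      unfolding q_def by (intro degree_prod_eq_sum_degree) auto
    then have dq: "degree q = r - 1" using cY Yfin y0 by simp
    have r1: "r \<ge> 1" using cY y0 Yfin by (metis card_0_eq empty_iff less_one not_le)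
    have qnz: "q \<noteq> 0" unfolding q_def by (simp add: prod_zero_iff Yfin)
    have "q = 0"
    proof (rule K2[OF D])
      show "degree q \<le> r" using dq by simp
      show "coeff q r = 0" using dq r1 by (simp add: coeff_eq_0)
      fix i assume i: "i < r"
      have dgq: "degree (g0 * q) \<le> nn" using degree_mult_le[of g0 q] g0(1) dq nn_mm by linarith
      have "hk c (g0 * q) i = (\<Sum>\<zeta>\<in>R. w \<zeta> * \<zeta> ^ i * poly (g0 * q) \<zeta>)"
        by (rule hk_moments[OF Rfin uR dgq i])
      also have "\<dots> = 0"
      proof (intro sum.neutral ballI)
        fix \<zeta> assume "\<zeta> \<in> R"
        then have "\<zeta> \<in> ZZ \<or> \<zeta> \<in> Y - {y0} \<or> \<zeta> = y0" unfolding Y_def by auto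
        moreover have "poly q \<zeta> = 0" if "\<zeta> \<in> Y - {y0}"
          unfolding q_def poly_prod using that Yfin by (auto intro: prod_zero)
        ultimately show "w \<zeta> * \<zeta> ^ i * poly (g0 * q) \<zeta> = 0" using g0(2) w0 by auto
      qed
      finally show "hk c (g0 * q) i = 0" .
    qed
    then show False using qnz by simp
  qed
  show ?thesis
    by (rule exI[of _ "\<lambda>j. w (z j)"], rule exI[of _ Y], rule exI[of _ w]) (use Yfin cY YZ wnz uZY in auto)
qed

end


lemma vanish_card:
  fixes q :: "complex poly"
  assumes "finite Y" "card Y = r" "degree q \<le> r" "coeff q r = 0" "\<And>y. y \<in> Y \<Longrightarrow> poly q y = 0"
  shows "q = 0"
proof (rule ccontr)
  assume q: "q \<noteq> 0"
  then have "degree q \<noteq> r \<or> r = 0" using assms(4) by (metis leading_coeff_0_iff)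
  then have "degree q < r \<or> q = 0" using assms(3,4) q
    by (metis coeff_0_degree_minus_1 degree_0 le_neq_implies_less leading_coeff_0_iff)
  then show False using poly_zero_many_roots[OF assms(1) _ assms(5)] q assms(2) by auto
qed

context wsetup begin

lemma witness: "\<exists>c. Fpol c \<noteq> 0"
proof -
  have "infinite (UNIV - ZZ :: complex set)" using ZZ(1) infinite_UNIV_char_0 by (simp add: Diff_infinite_finite)
  then obtain Y0 where Y0: "Y0 \<subseteq> UNIV - ZZ" "finite Y0" "card Y0 = r"
    using infinite_arbitrarily_large by blast
  define R0 where "R0 = ZZ \<union> Y0"
  have R0fin: "finite R0" unfolding R0_def using ZZ(1) Y0 by simp
  have YZ: "ZZ \<inter> Y0 = {}" using Y0 by auto
  have cR0: "card R0 = nn" unfolding R0_def using card_Un_disjoint[OF ZZ(1) Y0(2) YZ] ZZ(2) Y0(3) nn_mm by simp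
  define c0 where "c0 i = of_nat (d choose i) * (\<Sum>\<zeta>\<in>R0. \<zeta> ^ i)" for i
  have uu0: "uu c0 i = (\<Sum>\<zeta>\<in>R0. 1 * \<zeta> ^ i)" if "i \<le> d" for i
    unfolding uu_def c0_def using that by simp
  have hk0: "hk c0 (g0 * q) i = (\<Sum>y\<in>Y0. (poly g0 y * poly q y) * y ^ i)" if "degree q \<le> r" "i < r" for q i
  proof -
    have dg: "degree (g0 * q) \<le> nn" using degree_mult_le[of g0 q] g0(1) that nn_mm by linarith
    have "hk c0 (g0 * q) i = (\<Sum>\<zeta>\<in>R0. 1 * \<zeta> ^ i * poly (g0 * q) \<zeta>)"
      by (rule hk_moments[OF R0fin uu0 dg that(2)])
    also have "\<dots> = (\<Sum>\<zeta>\<in>ZZ. 1 * \<zeta> ^ i * poly (g0 * q) \<zeta>) + (\<Sum>\<zeta>\<in>Y0. 1 * \<zeta> ^ i * poly (g0 * q) \<zeta>)"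
      unfolding R0_def by (rule sum.union_disjoint[OF ZZ(1) Y0(2) YZ])
    also have "(\<Sum>\<zeta>\<in>ZZ. 1 * \<zeta> ^ i * poly (g0 * q) \<zeta>) = 0" using g0(2) by (intro sum.neutral) auto
    finally show ?thesis by (simp add: mult_ac)
  qed
  have vanish: "q = 0" if dq: "degree q \<le> r" and cq: "coeff q r = 0" and h: "\<And>i. i < r \<Longrightarrow> hk c0 (g0 * q) i = 0" for q
  proof (rule vanish_card[OF Y0(2,3) dq cq])
    fix y assume y: "y \<in> Y0"
    have "poly g0 y * poly q y = 0"
      using vander_inj[OF Y0(2,3), of "\<lambda>y. poly g0 y * poly q y" y] hk0[OF dq] h y by auto
    moreover have "poly g0 y \<noteq> 0" using g0(2) y Y0(1) by auto
    ultimately show "poly q y = 0" by simp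
  qed
  define D where "D = det (Amat c0)"
  have D: "D \<noteq> 0"
  proof
    assume "D = 0"
    then obtain x where x: "x \<in> carrier_vec (r+1)" "x \<noteq> 0\<^sub>v (r+1)" "Amat c0 *\<^sub>v x = 0\<^sub>v (r+1)"
      using det_0_iff_vec_prod_zero[OF Amat_carrier] unfolding D_def by blast
    have "vpol r x = 0"
    proof (rule vanish[OF degree_vpol])
      show "coeff (vpol r x) r = 0" using Amat_last[OF x(1), of c0] x(3) by (simp add: coeff_vpol)
      fix i assume i: "i < r"
      show "hk c0 (g0 * vpol r x) i = 0" using Amat_mult[OF x(1) i, of c0] x(3) i by simp
    qed
    then have "x $ e = 0" if "e < r + 1" for e using that coeff_vpol[of r x e] by simp
    then have "x = 0\<^sub>v (r+1)" using x(1) by (intro eq_vecI) auto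
    then show False using x(2) by simp
  qed
  define P where "P = (\<Prod>y\<in>Y0. [:-y, 1::complex:])"
  have dP: "degree P = r"
  proof -
    have "degree P = (\<Sum>y\<in>Y0. degree [:-y, 1::complex:])"
      unfolding P_def by (intro degree_prod_eq_sum_degree) auto
    then show ?thesis using Y0 by simp
  qed
  have Pz: "poly P y = 0" if y: "y \<in> Y0" for y
  proof -
    have "poly P y = (\<Prod>x\<in>Y0. poly [:-x, 1:] y)" by (simp add: P_def poly_prod)
    also have "\<dots> = 0" by (rule prod_zero) (use Y0(2) y in auto)
    finally show ?thesis .
  qed
  have lP: "coeff P r = 1" using dP lead_coeff_prod[of "\<lambda>y. [:-y, 1::complex:]" Y0] unfolding P_def by simp
  have H: "hpol c0 = smult D P"
  proof -
    have "hpol c0 - smult D P = 0"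
    proof (rule vanish)
      show "degree (hpol c0 - smult D P) \<le> r"
        using K1(3)[of c0] dP by (intro degree_diff_le) (auto intro: order.trans[OF degree_smult_le])
      show "coeff (hpol c0 - smult D P) r = 0" using K1(2)[of c0] lP unfolding D_def by simp
      fix i assume i: "i < r"
      have "hk c0 (g0 * (hpol c0 - smult D P)) i = (\<Sum>y\<in>Y0. (poly g0 y * poly (hpol c0 - smult D P) y) * y ^ i)"
        using hk0[of "hpol c0 - smult D P" i] i dP K1(3)[of c0]
        by (simp add: degree_diff_le order.trans[OF degree_smult_le])
      also have "\<dots> = (\<Sum>y\<in>Y0. (poly g0 y * poly (hpol c0) y) * y ^ i)"
        using Pz by (intro sum.cong refl) auto
      also have "\<dots> = hk c0 (g0 * hpol c0) i" using hk0[OF K1(3) i] by simp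
      also have "\<dots> = 0" using K1(1)[OF i, of c0] unfolding gG_def .
      finally show "hk c0 (g0 * (hpol c0 - smult D P)) i = 0" .
    qed
    then show ?thesis by simp
  qed
  have GG: "gG c0 = smult D (\<Prod>x\<in>R0. [:-x, 1:])"
    unfolding gG_def H R0_def g0_def P_def using prod.union_disjoint[OF ZZ(1) Y0(2) YZ, of "\<lambda>x. [:-x, 1::complex:]"]
    by (simp add: mult_smult_right)
  have dR: "degree (\<Prod>x\<in>R0. [:-x, 1::complex:]) = nn"
  proof -
    have "degree (\<Prod>x\<in>R0. [:-x, 1::complex:]) = (\<Sum>x\<in>R0. degree [:-x, 1::complex:])"
      by (intro degree_prod_eq_sum_degree) auto
    then show ?thesis using cR0 by simp
  qed
  have lR: "coeff (\<Prod>x\<in>R0. [:-x, 1::complex:]) nn = 1"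
    using dR lead_coeff_prod[of "\<lambda>y. [:-y, 1::complex:]" R0] by simp
  have dG: "degree (gG c0) = nn" unfolding GG using D dR by simp
  have cG: "coeff (gG c0) nn = D" unfolding GG using lR by simp
  have dG': "degree (pderiv (gG c0)) = nn - 1" using dG degree_pderiv[of "gG c0"] by simp
  have "resultant (gG c0) (pderiv (gG c0)) \<noteq> 0" unfolding GG by (intro sqf_res sqf_prod R0fin D)
  then have S: "det (sylvester_mat_sub nn (nn - 1) (gG c0) (pderiv (gG c0))) \<noteq> 0"
    unfolding resultant_sub resultant_sub_def dG dG' .
  have "Fpol c0 \<noteq> 0" unfolding Fpol_def using D S cG unfolding D_def by simp
  then show ?thesis by blast
qed

end


lemma hevP:
  assumes "finite S"
  shows "hev (card S) (\<Prod>x\<in>S. [:-p x, q x:]) a b = (\<Prod>x\<in>S. q x * a - p x * b)"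
    and "degree (\<Prod>x\<in>S. [:-p x, q x:]) \<le> card S"
proof -
  have "\<And>x. x \<in> S \<Longrightarrow> degree [:-p x, q x:] \<le> 1" by simp
  note h = hev_prod[of S "\<lambda>x. [:-p x, q x:]" a b, OF assms this]
  have "(\<Prod>x\<in>S. hev 1 [:-p x, q x:] a b) = (\<Prod>x\<in>S. q x * a - p x * b)"
    by (intro prod.cong refl) (rule hev_lin)
  then show "hev (card S) (\<Prod>x\<in>S. [:-p x, q x:]) a b = (\<Prod>x\<in>S. q x * a - p x * b)"
    using h by simp
  show "degree (\<Prod>x\<in>S. [:-p x, q x:]) \<le> card S" using h by simp
qed

lemma hev3:
  assumes "finite S1" "finite S2" "finite S3" "card S1 + card S2 + card S3 \<le> d"
  shows "hev d ((\<Prod>x\<in>S1. [:-p1 x, q1 x:]) * (\<Prod>x\<in>S2. [:-p2 x, q2 x:]) * (\<Prod>x\<in>S3. [:-p3 x, q3 x:])) a b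
       = (\<Prod>x\<in>S1. q1 x * a - p1 x * b) * (\<Prod>x\<in>S2. q2 x * a - p2 x * b) * (\<Prod>x\<in>S3. q3 x * a - p3 x * b)
         * b ^ (d - (card S1 + card S2 + card S3))"
    and "degree ((\<Prod>x\<in>S1. [:-p1 x, q1 x:]) * (\<Prod>x\<in>S2. [:-p2 x, q2 x:]) * (\<Prod>x\<in>S3. [:-p3 x, q3 x:])) \<le> d"
proof -
  let ?P1 = "\<Prod>x\<in>S1. [:-p1 x, q1 x:]" and ?P2 = "\<Prod>x\<in>S2. [:-p2 x, q2 x:]" and ?P3 = "\<Prod>x\<in>S3. [:-p3 x, q3 x:]"
  note h1 = hevP(1)[OF assms(1), of p1 q1 a b] hevP(2)[OF assms(1), of p1 q1]
    and h2 = hevP(1)[OF assms(2), of p2 q2 a b] hevP(2)[OF assms(2), of p2 q2]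
    and h3 = hevP(1)[OF assms(3), of p3 q3 a b] hevP(2)[OF assms(3), of p3 q3]
  have d12: "degree (?P1 * ?P2) \<le> card S1 + card S2" using degree_mult_le[of ?P1 ?P2] h1(2) h2(2) by linarith
  have d123: "degree (?P1 * ?P2 * ?P3) \<le> card S1 + card S2 + card S3"
    using degree_mult_le[of "?P1 * ?P2" ?P3] d12 h3(2) by linarith
  then show "degree (?P1 * ?P2 * ?P3) \<le> d" using assms(4) by linarith
  have "hev d (?P1 * ?P2 * ?P3) a b = hev (card S1 + card S2 + card S3) (?P1 * ?P2 * ?P3) a b * b ^ (d - (card S1 + card S2 + card S3))"
    by (rule hev_pad[OF d123 assms(4)])
  also have "hev (card S1 + card S2 + card S3) (?P1 * ?P2 * ?P3) a b = hev (card S1 + card S2) (?P1 * ?P2) a b * hev (card S3) ?P3 a b"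
    by (rule hev_mult[OF d12 h3(2)])
  also have "hev (card S1 + card S2) (?P1 * ?P2) a b = hev (card S1) ?P1 a b * hev (card S2) ?P2 a b"
    by (rule hev_mult[OF h1(2) h2(2)])
  finally show "hev d (?P1 * ?P2 * ?P3) a b = (\<Prod>x\<in>S1. q1 x * a - p1 x * b) * (\<Prod>x\<in>S2. q2 x * a - p2 x * b) * (\<Prod>x\<in>S3. q3 x * a - p3 x * b)
         * b ^ (d - (card S1 + card S2 + card S3))" using h1(1) h2(1) h3(1) by simp
qed

context wsetup begin

lemma fun_eq:
  assumes "waring_rep d r \<alpha> \<beta> c t s1 s2" "waring_rep d r \<alpha> \<beta> c t' s1' s2'" "degree \<phi> \<le> d"
  shows "(\<Sum>j=1..mm. t j * hev d \<phi> (\<alpha> j) (\<beta> j)) + (\<Sum>k=1..r. hev d \<phi> (s1 k) (s2 k))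
       = (\<Sum>j=1..mm. t' j * hev d \<phi> (\<alpha> j) (\<beta> j)) + (\<Sum>k=1..r. hev d \<phi> (s1' k) (s2' k))"
proof -
  have "mom d mm r t \<alpha> \<beta> s1 s2 i = mom d mm r t' \<alpha> \<beta> s1' s2' i" if "i \<le> d" for i
    using assms(1,2) that unfolding rep_iff mm_def by (metis binomial_eq_0_iff mult_cancel_left not_le of_nat_eq_0_iff)
  then have "(\<Sum>i\<le>d. coeff \<phi> i * mom d mm r t \<alpha> \<beta> s1 s2 i) = (\<Sum>i\<le>d. coeff \<phi> i * mom d mm r t' \<alpha> \<beta> s1' s2' i)"
    by simp
  then show ?thesis unfolding functional[OF assms(3)] .
qed

lemma construct:
  assumes F: "Fpol c \<noteq> 0"
  shows "\<exists>t s1 s2 ys \<mu> w Y. waring_rep d r \<alpha> \<beta> c t s1 s2 \<and> bij_betw ys {1..r} Y \<and> Y \<inter> ZZ = {} \<and>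
     (\<forall>k\<in>{1..r}. \<mu> k \<noteq> 0 \<and> s1 k = \<mu> k * ys k \<and> s2 k = \<mu> k \<and> \<mu> k ^ d = w (ys k)) \<and> (\<forall>y\<in>Y. w y \<noteq> 0)"
proof -
  obtain tt Y w where Y: "finite Y" "card Y = r" "Y \<inter> ZZ = {}" "\<forall>y\<in>Y. w y \<noteq> 0"
    and u: "\<forall>i\<le>d. uu c i = (\<Sum>j=1..mm. tt j * z j ^ i) + (\<Sum>y\<in>Y. w y * y ^ i)"
    using exist[OF F] by blast
  obtain ys where ys: "bij_betw ys {1..r} Y" using ex_bij_betw_nat_finite_1[OF Y(1)] Y(2) by auto
  have "\<exists>m. m ^ d = w (ys k) \<and> m \<noteq> 0" if k: "k \<in> {1..r}" for k
  proof -
    have "ys k \<in> Y" using ys k bij_betwE by blast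
    then have wnz: "w (ys k) \<noteq> 0" using Y(4) by auto
    then have "card {m. m ^ d = w (ys k)} = d" using card_nth_roots d1 by auto
    then have "{m. m ^ d = w (ys k)} \<noteq> {}" using d1 by (intro notI) simp
    then obtain m where "m ^ d = w (ys k)" by blast
    moreover have "m \<noteq> 0" using calculation wnz d1 by (auto simp: zero_power)
    ultimately show ?thesis by blast
  qed
  then obtain \<mu> where \<mu>: "\<And>k. k \<in> {1..r} \<Longrightarrow> \<mu> k ^ d = w (ys k) \<and> \<mu> k \<noteq> 0" by metis
  define t where "t j = tt j / \<beta> j ^ d" for j
  define s1 where "s1 k = \<mu> k * ys k" for k
  define s2 where "s2 k = \<mu> k" for k
  have rep: "waring_rep d r \<alpha> \<beta> c t s1 s2"
    unfolding rep_iff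
  proof (intro allI impI)
    fix i assume i: "i \<le> d"
    have b: "of_nat (d choose i) \<noteq> (0::complex)" using i by simp
    have "c i = of_nat (d choose i) * uu c i" unfolding uu_def using b by simp
    moreover have "(\<Sum>j=1..mm. tt j * z j ^ i) = (\<Sum>j=1..mm. t j * \<alpha> j ^ i * \<beta> j ^ (d - i))"
    proof (intro sum.cong refl)
      fix j assume j: "j \<in> {1..mm}"
      have bj: "\<beta> j \<noteq> 0" using bnz j unfolding mm_def by auto
      have "\<beta> j ^ d = \<beta> j ^ i * \<beta> j ^ (d - i)" using i by (simp add: power_add[symmetric])
      then show "tt j * z j ^ i = t j * \<alpha> j ^ i * \<beta> j ^ (d - i)"
        unfolding t_def z_def using bj by (simp add: power_divide field_simps)
    qed
    moreover have "(\<Sum>y\<in>Y. w y * y ^ i) = (\<Sum>k=1..r. s1 k ^ i * s2 k ^ (d - i))"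
    proof -
      have "(\<Sum>y\<in>Y. w y * y ^ i) = (\<Sum>k=1..r. w (ys k) * ys k ^ i)"
        using sum.reindex_bij_betw[OF ys, of "\<lambda>y. w y * y ^ i"] by simp
      also have "\<dots> = (\<Sum>k=1..r. s1 k ^ i * s2 k ^ (d - i))"
      proof (intro sum.cong refl)
        fix k assume k: "k \<in> {1..r}"
        have "\<mu> k ^ d = \<mu> k ^ i * \<mu> k ^ (d - i)" using i by (simp add: power_add[symmetric])
        then show "w (ys k) * ys k ^ i = s1 k ^ i * s2 k ^ (d - i)"
          unfolding s1_def s2_def using \<mu>[OF k] by (simp add: power_mult_distrib mult_ac)
      qed
      finally show ?thesis .
    qed
    ultimately show "c i = of_nat (d choose i) * mom d (d + 1 - 2 * r) r t \<alpha> \<beta> s1 s2 i"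
      using u i unfolding mom_def mm_def by simp
  qed
  show ?thesis
    apply (rule exI[of _ t], rule exI[of _ s1], rule exI[of _ s2], rule exI[of _ ys], rule exI[of _ \<mu>], rule exI[of _ w], rule exI[of _ Y])
    using rep ys Y \<mu> unfolding s1_def s2_def by auto
qed

end


lemma single_sum:
  assumes "finite A" "a \<in> A" "\<And>x. x \<in> A \<Longrightarrow> x \<noteq> a \<Longrightarrow> f x = 0"
  shows "sum f A = f a"
proof -
  have "sum f A = (\<Sum>x\<in>{a}. f x)" using assms by (intro sum.mono_neutral_right) auto
  then show ?thesis by simp
qed

context wsetup begin

definition Phi :: "nat set \<Rightarrow> complex set \<Rightarrow> nat set \<Rightarrow> (nat \<Rightarrow> complex) \<Rightarrow> (nat \<Rightarrow> complex) \<Rightarrow> complex poly" where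
  "Phi S1 S2 S3 p3 q3 = (\<Prod>x\<in>S1. [:-\<alpha> x, \<beta> x:]) * (\<Prod>x\<in>S2. [:-(\<lambda>y. y) x, (\<lambda>_. 1) x:]) * (\<Prod>x\<in>S3. [:-p3 x, q3 x:])"

lemma Phi:
  assumes "finite S1" "finite S2" "finite S3" "card S1 + card S2 + card S3 \<le> d"
  shows "hev d (Phi S1 S2 S3 p3 q3) a b
       = (\<Prod>x\<in>S1. \<beta> x * a - \<alpha> x * b) * (\<Prod>x\<in>S2. a - x * b) * (\<Prod>x\<in>S3. q3 x * a - p3 x * b)
         * b ^ (d - (card S1 + card S2 + card S3))"
    and "degree (Phi S1 S2 S3 p3 q3) \<le> d"
  using hev3(1)[OF assms, of \<alpha> \<beta> "\<lambda>y. y" "\<lambda>_. 1" p3 q3 a b]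
    hev3(2)[OF assms, of \<alpha> \<beta> "\<lambda>y. y" "\<lambda>_. 1" p3 q3] unfolding Phi_def by auto

lemma unique:
  assumes rep: "waring_rep d r \<alpha> \<beta> c t s1 s2"
    and ys: "bij_betw ys {1..r} Y" and YZ: "Y \<inter> ZZ = {}"
    and \<mu>: "\<forall>k\<in>{1..r}. \<mu> k \<noteq> 0 \<and> s1 k = \<mu> k * ys k \<and> s2 k = \<mu> k \<and> \<mu> k ^ d = w (ys k)"
    and wnz: "\<forall>y\<in>Y. w y \<noteq> 0"
    and rep': "waring_rep d r \<alpha> \<beta> c t' s1' s2'"
  shows "(\<forall>j\<in>{1..mm}. t' j = t j) \<and> (\<exists>\<sigma> \<zeta>. bij_betw \<sigma> {1..r} {1..r} \<and>
           (\<forall>k\<in>{1..r}. \<zeta> k ^ d = 1 \<and> s1' k = \<zeta> k * s1 (\<sigma> k) \<and> s2' k = \<zeta> k * s2 (\<sigma> k)))"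
proof -
  have Yfin: "finite Y" and cY: "card Y = r" using ys bij_betw_finite bij_betw_same_card by fastforce+
  have ysY: "ys k \<in> Y" if "k \<in> {1..r}" for k using ys that bij_betwE by blast
  have ysinj: "inj_on ys {1..r}" using ys by (simp add: bij_betw_def)
  have bj: "\<beta> j \<noteq> 0" if "j \<in> {1..mm}" for j using bnz that unfolding mm_def by auto
  have aj: "\<alpha> j = z j * \<beta> j" if "j \<in> {1..mm}" for j using bj[OF that] unfolding z_def by simp
  have zZ: "z j \<in> ZZ" if "j \<in> {1..mm}" for j using that unfolding ZZ_def by simp
  have yz: "\<beta> j * y - \<alpha> j * 1 \<noteq> 0" if "j \<in> {1..mm}" "y \<in> Y" for j y
  proof
    assume "\<beta> j * y - \<alpha> j * 1 = 0"
    then have "\<beta> j * (y - z j) = 0" using aj[OF that(1)] by (simp add: algebra_simps)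
    then have "y = z j" using bj[OF that(1)] by simp
    then show False using YZ zZ[OF that(1)] that(2) by auto
  qed
  have card_mm: "mm + 2 * r = d + 1" using r2 unfolding mm_def by simp
  note FE = fun_eq[OF rep rep']
  have sc: "hev d p (s1 k) (s2 k) = w (ys k) * hev d p (ys k) 1" if "k \<in> {1..r}" for k p
    using \<mu> that hev_scale[of d p "\<mu> k" "ys k" 1] by auto
  have claimA: "\<exists>k'\<in>{1..r}. s2' k' \<noteq> 0 \<and> s1' k' = ys k0 * s2' k'" if k0: "k0 \<in> {1..r}" for k0
  proof (rule ccontr)
    assume na: "\<not> (\<exists>k'\<in>{1..r}. s2' k' \<noteq> 0 \<and> s1' k' = ys k0 * s2' k')"
    define y0 where "y0 = ys k0"
    define S3 where "S3 = {k\<in>{1..r}. s1' k \<noteq> 0 \<or> s2' k \<noteq> 0}"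
    have y0Y: "y0 \<in> Y" unfolding y0_def using ysY[OF k0] .
    have S3fin: "finite S3" unfolding S3_def by simp
    have "card S3 \<le> card {1..r}" unfolding S3_def by (intro card_mono) auto
    then have cS3: "card S3 \<le> r" by simp
    have cY0: "card (Y - {y0}) = r - 1" using cY y0Y Yfin by simp
    have r1: "r \<ge> 1" using k0 by simp
    have cards: "card {1..mm} + card (Y - {y0}) + card S3 \<le> d" using cS3 cY0 card_mm r1 by simp
    let ?P = "Phi {1..mm} (Y - {y0}) S3 s1' s2'"
    note PE = Phi(1)[OF finite_atLeastAtMost finite_Diff[OF Yfin] S3fin cards]
      and PD = Phi(2)[OF finite_atLeastAtMost finite_Diff[OF Yfin] S3fin cards]
    have evl: "hev d ?P (\<alpha> j) (\<beta> j) = 0" if "j \<in> {1..mm}" for j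
    proof -
      have "(\<Prod>x\<in>{1..mm}. \<beta> x * \<alpha> j - \<alpha> x * \<beta> j) = 0"
        by (rule prod_zero) (use that in \<open>auto intro!: bexI[of _ j] simp: mult.commute\<close>)
      then show ?thesis by (simp only: PE mult_zero_left mult_zero_right)
    qed
    have L1: "(\<Sum>j=1..mm. t j * hev d ?P (\<alpha> j) (\<beta> j)) = 0"
      using evl by (intro sum.neutral ballI) auto
    have R1: "(\<Sum>j=1..mm. t' j * hev d ?P (\<alpha> j) (\<beta> j)) = 0"
      using evl by (intro sum.neutral ballI) auto
    have R2: "(\<Sum>k=1..r. hev d ?P (s1' k) (s2' k)) = 0"
    proof (intro sum.neutral ballI)
      fix k assume k: "k \<in> {1..r}"
      show "hev d ?P (s1' k) (s2' k) = 0"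
      proof (cases "k \<in> S3")
        case True
        have "(\<Prod>x\<in>S3. s2' x * s1' k - s1' x * s2' k) = 0"
          using True S3fin by (intro prod_zero) (auto intro!: bexI[of _ k])
        then show ?thesis by (simp only: PE mult_zero_left mult_zero_right)
      next
        case False
        then have "s1' k = 0" "s2' k = 0" using k unfolding S3_def by auto
        then show ?thesis using hev_00 d1 by simp
      qed
    qed
    have V0: "hev d ?P y0 1 \<noteq> 0"
    proof -
      have "(\<Prod>x\<in>{1..mm}. \<beta> x * y0 - \<alpha> x * 1) \<noteq> 0"
      proof -
        have "\<forall>x\<in>{1..mm}. \<beta> x * y0 - \<alpha> x * 1 \<noteq> 0" using yz y0Y by blast
        then show ?thesis by (simp only: prod_zero_iff[OF finite_atLeastAtMost]) blast
      qed
      moreover have "(\<Prod>x\<in>Y - {y0}. y0 - x * 1) \<noteq> 0" using Yfin by simp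
      moreover have "(\<Prod>x\<in>S3. s2' x * y0 - s1' x * 1) \<noteq> 0"
      proof -
        have "s2' x * y0 - s1' x * 1 \<noteq> 0" if x: "x \<in> S3" for x
        proof
          assume e: "s2' x * y0 - s1' x * 1 = 0"
          have xr: "x \<in> {1..r}" using x unfolding S3_def by auto
          show False
          proof (cases "s2' x = 0")
            case True then show False using e x unfolding S3_def by auto
          next
            case False
            have "s1' x = s2' x * y0" using e by (simp add: right_minus_eq)
            then have "s1' x = ys k0 * s2' x" unfolding y0_def by (simp add: mult.commute)
            then show False using na xr False by blast
          qed
        qed
        then show ?thesis using S3fin by simp
      qed
      ultimately show ?thesis unfolding PE by (intro no_zero_divisors power_not_zero) (assumption | simp)+
    qed
    have L2: "(\<Sum>k=1..r. hev d ?P (s1 k) (s2 k)) = w y0 * hev d ?P y0 1"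
    proof -
      have "(\<Sum>k=1..r. hev d ?P (s1 k) (s2 k)) = hev d ?P (s1 k0) (s2 k0)"
      proof (rule single_sum[OF _ k0])
        fix k assume k: "k \<in> {1..r}" "k \<noteq> k0"
        have "ys k \<noteq> ys k0" using inj_onD[OF ysinj _ k(1) k0] k(2) by blast
        then have yk: "ys k \<in> Y - {y0}" using ysY[OF k(1)] unfolding y0_def by blast
        have "(\<Prod>x\<in>Y - {y0}. ys k - x * 1) = 0"
          by (rule prod_zero) (use Yfin yk in \<open>auto intro!: bexI[of _ "ys k"]\<close>)
        then have "hev d ?P (ys k) 1 = 0" by (simp only: PE mult_zero_left mult_zero_right)
        then show "hev d ?P (s1 k) (s2 k) = 0" using sc[OF k(1)] by simp
      qed simp
      then show ?thesis using sc[OF k0] unfolding y0_def by simp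
    qed
    have "w y0 * hev d ?P y0 1 = 0" using FE[OF PD[of s1' s2']] L1 L2 R1 R2 by simp
    then show False using V0 wnz y0Y by simp
  qed
  then obtain \<tau> where \<tau>: "\<And>k0. k0 \<in> {1..r} \<Longrightarrow> \<tau> k0 \<in> {1..r} \<and> s2' (\<tau> k0) \<noteq> 0 \<and> s1' (\<tau> k0) = ys k0 * s2' (\<tau> k0)"
    by metis
  have \<tau>inj: "inj_on \<tau> {1..r}"
  proof (rule inj_onI)
    fix a b assume a: "a \<in> {1..r}" and b: "b \<in> {1..r}" and e: "\<tau> a = \<tau> b"
    have "ys a * s2' (\<tau> a) = ys b * s2' (\<tau> a)" using \<tau>[OF a] \<tau>[OF b] e by simp
    then have "ys a = ys b" using \<tau>[OF a] by simp
    then show "a = b" using inj_onD[OF ysinj _ a b] by blast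
  qed
  have \<tau>im: "\<tau> ` {1..r} = {1..r}" using \<tau> \<tau>inj by (intro endo_inj_surj) auto
  have \<tau>bij: "bij_betw \<tau> {1..r} {1..r}" using \<tau>inj \<tau>im by (simp add: bij_betw_def)
  define \<sigma> where "\<sigma> = the_inv_into {1..r} \<tau>"
  have \<sigma>bij: "bij_betw \<sigma> {1..r} {1..r}" unfolding \<sigma>_def by (rule bij_betw_the_inv_into[OF \<tau>bij])
  have \<sigma>in: "\<sigma> k \<in> {1..r}" if "k \<in> {1..r}" for k using \<sigma>bij that bij_betwE by blast
  have \<tau>\<sigma>: "\<tau> (\<sigma> k) = k" if "k \<in> {1..r}" for k unfolding \<sigma>_def using f_the_inv_into_f[OF \<tau>inj] \<tau>im that by auto
  have \<sigma>inj: "inj_on \<sigma> {1..r}" using \<sigma>bij by (simp add: bij_betw_def)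
  have s': "s2' k \<noteq> 0 \<and> s1' k = ys (\<sigma> k) * s2' k" if k: "k \<in> {1..r}" for k
    using \<tau>[OF \<sigma>in[OF k]] \<tau>\<sigma>[OF k] by simp
  have sc': "hev d p (s1' k) (s2' k) = s2' k ^ d * hev d p (ys (\<sigma> k)) 1" if "k \<in> {1..r}" for k p
    using s'[OF that] hev_scale[of d p "s2' k" "ys (\<sigma> k)" 1] by (simp add: mult.commute)
  have claimB: "t' j0 = t j0" if j0: "j0 \<in> {1..mm}" for j0
  proof -
    have cards: "card ({1..mm} - {j0}) + card Y + card ({}::nat set) \<le> d" using cY card_mm j0 by simp
    let ?P = "Phi ({1..mm} - {j0}) Y {} s1' s2'"
    note PE = Phi(1)[OF finite_Diff[OF finite_atLeastAtMost] Yfin finite.emptyI cards]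
      and PD = Phi(2)[OF finite_Diff[OF finite_atLeastAtMost] Yfin finite.emptyI cards]
    have ev_other: "hev d ?P (\<alpha> j) (\<beta> j) = 0" if "j \<in> {1..mm}" "j \<noteq> j0" for j
    proof -
      have "(\<Prod>x\<in>{1..mm} - {j0}. \<beta> x * \<alpha> j - \<alpha> x * \<beta> j) = 0"
        by (rule prod_zero) (use that in \<open>auto intro!: bexI[of _ j] simp: mult.commute\<close>)
      then show ?thesis by (simp only: PE mult_zero_left mult_zero_right)
    qed
    have ev_Y: "hev d ?P y 1 = 0" if "y \<in> Y" for y
    proof -
      have "(\<Prod>x\<in>Y. y - x * 1) = 0" using that Yfin by (intro prod_zero) auto
      then show ?thesis by (simp only: PE mult_zero_left mult_zero_right)
    qed
    have V: "hev d ?P (\<alpha> j0) (\<beta> j0) \<noteq> 0"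
    proof -
      have "\<beta> x * \<alpha> j0 - \<alpha> x * \<beta> j0 \<noteq> 0" if x: "x \<in> {1..mm} - {j0}" for x
      proof
        assume "\<beta> x * \<alpha> j0 - \<alpha> x * \<beta> j0 = 0"
        then have "\<beta> x * \<beta> j0 * (z j0 - z x) = 0" using aj[OF j0] aj[of x] x by (simp add: algebra_simps)
        then have "z j0 = z x" using bj[OF j0] bj[of x] x by simp
        then show False using zinj x j0 unfolding inj_on_def z_def mm_def by auto
      qed
      then have "(\<Prod>x\<in>{1..mm} - {j0}. \<beta> x * \<alpha> j0 - \<alpha> x * \<beta> j0) \<noteq> 0" by simp
      moreover have "(\<Prod>x\<in>Y. \<alpha> j0 - x * \<beta> j0) \<noteq> 0"
      proof -
        have "\<alpha> j0 - x * \<beta> j0 \<noteq> 0" if "x \<in> Y" for x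
          using yz[OF j0 that] aj[OF j0] bj[OF j0] by (auto simp: algebra_simps)
        then show ?thesis using Yfin by simp
      qed
      ultimately show ?thesis unfolding PE using bj[OF j0] by (intro no_zero_divisors power_not_zero) (assumption | simp)+
    qed
    have LT: "(\<Sum>j=1..mm. t j * hev d ?P (\<alpha> j) (\<beta> j)) = t j0 * hev d ?P (\<alpha> j0) (\<beta> j0)"
      using ev_other by (intro single_sum[OF _ j0]) auto
    have RT: "(\<Sum>j=1..mm. t' j * hev d ?P (\<alpha> j) (\<beta> j)) = t' j0 * hev d ?P (\<alpha> j0) (\<beta> j0)"
      using ev_other by (intro single_sum[OF _ j0]) auto
    have LS: "(\<Sum>k=1..r. hev d ?P (s1 k) (s2 k)) = 0"
      using sc ev_Y ysY by (intro sum.neutral) auto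
    have RS: "(\<Sum>k=1..r. hev d ?P (s1' k) (s2' k)) = 0"
      using sc' ev_Y ysY \<sigma>in by (intro sum.neutral) auto
    show ?thesis using FE[OF PD[of s1' s2']] LT RT LS RS V by simp
  qed
  have claimC: "s2' k ^ d = w (ys (\<sigma> k))" if k: "k \<in> {1..r}" for k
  proof -
    define y0 where "y0 = ys (\<sigma> k)"
    have y0Y: "y0 \<in> Y" unfolding y0_def using ysY \<sigma>in k by blast
    have cY0: "card (Y - {y0}) = r - 1" using cY y0Y Yfin by simp
    have cards: "card {1..mm} + card (Y - {y0}) + card ({}::nat set) \<le> d" using cY0 card_mm k by simp
    let ?P = "Phi {1..mm} (Y - {y0}) {} s1' s2'"
    note PE = Phi(1)[OF finite_atLeastAtMost finite_Diff[OF Yfin] finite.emptyI cards]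
      and PD = Phi(2)[OF finite_atLeastAtMost finite_Diff[OF Yfin] finite.emptyI cards]
    have evl: "hev d ?P (\<alpha> j) (\<beta> j) = 0" if "j \<in> {1..mm}" for j
    proof -
      have "(\<Prod>x\<in>{1..mm}. \<beta> x * \<alpha> j - \<alpha> x * \<beta> j) = 0"
        by (rule prod_zero) (use that in \<open>auto intro!: bexI[of _ j] simp: mult.commute\<close>)
      then show ?thesis by (simp only: PE mult_zero_left mult_zero_right)
    qed
    have evY: "hev d ?P y 1 = 0" if "y \<in> Y - {y0}" for y
    proof -
      have "(\<Prod>x\<in>Y - {y0}. y - x * 1) = 0" using that Yfin by (intro prod_zero) auto
      then show ?thesis by (simp only: PE mult_zero_left mult_zero_right)
    qed
    have V0: "hev d ?P y0 1 \<noteq> 0"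
    proof -
      have "(\<Prod>x\<in>{1..mm}. \<beta> x * y0 - \<alpha> x * 1) \<noteq> 0"
      proof -
        have "\<forall>x\<in>{1..mm}. \<beta> x * y0 - \<alpha> x * 1 \<noteq> 0" using yz y0Y by blast
        then show ?thesis by (simp only: prod_zero_iff[OF finite_atLeastAtMost]) blast
      qed
      moreover have "(\<Prod>x\<in>Y - {y0}. y0 - x * 1) \<noteq> 0" using Yfin by simp
      ultimately show ?thesis unfolding PE by (intro no_zero_divisors power_not_zero) (assumption | simp)+
    qed
    have LS: "(\<Sum>k'=1..r. hev d ?P (s1 k') (s2 k')) = w y0 * hev d ?P y0 1"
    proof -
      have "(\<Sum>k'=1..r. hev d ?P (s1 k') (s2 k')) = hev d ?P (s1 (\<sigma> k)) (s2 (\<sigma> k))"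
      proof (rule single_sum[OF _ \<sigma>in[OF k]])
        fix k' assume k': "k' \<in> {1..r}" "k' \<noteq> \<sigma> k"
        have "ys k' \<noteq> ys (\<sigma> k)" using inj_onD[OF ysinj _ k'(1) \<sigma>in[OF k]] k'(2) by blast
        then have "ys k' \<in> Y - {y0}" using ysY[OF k'(1)] unfolding y0_def by blast
        then show "hev d ?P (s1 k') (s2 k') = 0" using sc[OF k'(1)] evY by simp
      qed simp
      then show ?thesis using sc[OF \<sigma>in[OF k]] unfolding y0_def by simp
    qed
    have RS: "(\<Sum>k'=1..r. hev d ?P (s1' k') (s2' k')) = s2' k ^ d * hev d ?P y0 1"
    proof -
      have "(\<Sum>k'=1..r. hev d ?P (s1' k') (s2' k')) = hev d ?P (s1' k) (s2' k)"
      proof (rule single_sum[OF _ k])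
        fix k' assume k': "k' \<in> {1..r}" "k' \<noteq> k"
        then have "\<sigma> k' \<noteq> \<sigma> k" using inj_onD[OF \<sigma>inj _ k'(1) k] by blast
        then have "ys (\<sigma> k') \<noteq> ys (\<sigma> k)" using inj_onD[OF ysinj _ \<sigma>in[OF k'(1)] \<sigma>in[OF k]] by blast
        then have "ys (\<sigma> k') \<in> Y - {y0}" using ysY[OF \<sigma>in[OF k'(1)]] unfolding y0_def by blast
        then show "hev d ?P (s1' k') (s2' k') = 0" using sc'[OF k'(1)] evY by simp
      qed simp
      then show ?thesis using sc'[OF k] unfolding y0_def by simp
    qed
    have "w y0 * hev d ?P y0 1 = s2' k ^ d * hev d ?P y0 1"
      using FE[OF PD[of s1' s2']] LS RS evl by simp
    then show ?thesis using V0 unfolding y0_def by simp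
  qed
  define \<zeta> where "\<zeta> k = s2' k / \<mu> (\<sigma> k)" for k
  have "\<forall>k\<in>{1..r}. \<zeta> k ^ d = 1 \<and> s1' k = \<zeta> k * s1 (\<sigma> k) \<and> s2' k = \<zeta> k * s2 (\<sigma> k)"
  proof
    fix k assume k: "k \<in> {1..r}"
    have m: "\<mu> (\<sigma> k) \<noteq> 0" "s1 (\<sigma> k) = \<mu> (\<sigma> k) * ys (\<sigma> k)" "s2 (\<sigma> k) = \<mu> (\<sigma> k)"
      "\<mu> (\<sigma> k) ^ d = w (ys (\<sigma> k))" using \<mu> \<sigma>in[OF k] by auto
    have "w (ys (\<sigma> k)) \<noteq> 0" using wnz ysY[OF \<sigma>in[OF k]] by blast
    then have "\<zeta> k ^ d = 1" unfolding \<zeta>_def using claimC[OF k] m by (simp add: power_divide)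
    moreover have "s1' k = \<zeta> k * s1 (\<sigma> k)" unfolding \<zeta>_def using s'[OF k] m by simp
    moreover have "s2' k = \<zeta> k * s2 (\<sigma> k)" unfolding \<zeta>_def using m by simp
    ultimately show "\<zeta> k ^ d = 1 \<and> s1' k = \<zeta> k * s1 (\<sigma> k) \<and> s2' k = \<zeta> k * s2 (\<sigma> k)" by simp
  qed
  then show ?thesis using claimB \<sigma>bij by metis
qed

end


context wsetup begin

theorem main_loc:
  "general_binform d (\<lambda>c.
           \<exists>t s1 s2. waring_rep d r \<alpha> \<beta> c t s1 s2 \<and>
             (\<forall>t' s1' s2'. waring_rep d r \<alpha> \<beta> c t' s1' s2' \<longrightarrow>
                (\<forall>j\<in>{1..d + 1 - 2 * r}. t' j = t j) \<and>
                (\<exists>\<sigma> \<zeta>. bij_betw \<sigma> {1..r} {1..r} \<and>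
                   (\<forall>k\<in>{1..r}. \<zeta> k ^ d = 1 \<and>
                      s1' k = \<zeta> k * s1 (\<sigma> k) \<and> s2' k = \<zeta> k * s2 (\<sigma> k)))))"
  unfolding general_binform_def
proof (intro bexI[of _ Fpol] conjI allI impI)
  show "Fpol \<in> polyfun (d + 1)" by (rule pf_Fpol)
  show "\<exists>c. Fpol c \<noteq> 0" by (rule witness)
  fix c assume F: "Fpol c \<noteq> 0"
  obtain t s1 s2 ys \<mu> w Y where rep: "waring_rep d r \<alpha> \<beta> c t s1 s2" and ys: "bij_betw ys {1..r} Y"
    and YZ: "Y \<inter> ZZ = {}"
    and \<mu>: "\<forall>k\<in>{1..r}. \<mu> k \<noteq> 0 \<and> s1 k = \<mu> k * ys k \<and> s2 k = \<mu> k \<and> \<mu> k ^ d = w (ys k)"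
    and wnz: "\<forall>y\<in>Y. w y \<noteq> 0"
    using construct[OF F] by blast
  show "\<exists>t s1 s2. waring_rep d r \<alpha> \<beta> c t s1 s2 \<and>
             (\<forall>t' s1' s2'. waring_rep d r \<alpha> \<beta> c t' s1' s2' \<longrightarrow>
                (\<forall>j\<in>{1..d + 1 - 2 * r}. t' j = t j) \<and>
                (\<exists>\<sigma> \<zeta>. bij_betw \<sigma> {1..r} {1..r} \<and>
                   (\<forall>k\<in>{1..r}. \<zeta> k ^ d = 1 \<and>
                      s1' k = \<zeta> k * s1 (\<sigma> k) \<and> s2' k = \<zeta> k * s2 (\<sigma> k))))"
    using rep unique[OF rep ys YZ \<mu> wnz] unfolding mm_def by blast
qed

end

definition shiftc :: "nat \<Rightarrow> complex \<Rightarrow> (nat \<Rightarrow> complex) \<Rightarrow> nat \<Rightarrow> complex" where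
  "shiftc d \<kappa> c i = (\<Sum>i'\<le>d. c i' * of_nat (i' choose i) * \<kappa> ^ (i' - i))"

lemma shiftc_binform: "binform d (shiftc d \<kappa> c) X Y = binform d c (X + \<kappa> * Y) Y"
proof -
  have "binform d c (X + \<kappa> * Y) Y = (\<Sum>i'\<le>d. c i' * (\<Sum>i\<le>i'. of_nat (i' choose i) * X ^ i * (\<kappa> * Y) ^ (i' - i)) * Y ^ (d - i'))"
    unfolding binform_def binomial_ring by simp
  also have "\<dots> = (\<Sum>i'\<le>d. \<Sum>i\<le>d. c i' * of_nat (i' choose i) * \<kappa> ^ (i' - i) * (X ^ i * Y ^ (d - i)))"
  proof (intro sum.cong refl)
    fix i' assume i': "i' \<in> {..d}"
    have "c i' * (\<Sum>i\<le>i'. of_nat (i' choose i) * X ^ i * (\<kappa> * Y) ^ (i' - i)) * Y ^ (d - i')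
        = (\<Sum>i\<le>i'. c i' * of_nat (i' choose i) * \<kappa> ^ (i' - i) * (X ^ i * Y ^ (d - i)))"
    proof -
      have "c i' * (\<Sum>i\<le>i'. of_nat (i' choose i) * X ^ i * (\<kappa> * Y) ^ (i' - i)) * Y ^ (d - i')
          = (\<Sum>i\<le>i'. c i' * of_nat (i' choose i) * \<kappa> ^ (i' - i) * X ^ i * (Y ^ (i' - i) * Y ^ (d - i')))"
        by (simp add: sum_distrib_left sum_distrib_right power_mult_distrib mult_ac)
      also have "\<dots> = (\<Sum>i\<le>i'. c i' * of_nat (i' choose i) * \<kappa> ^ (i' - i) * (X ^ i * Y ^ (d - i)))"
      proof (intro sum.cong refl)
        fix i assume "i \<in> {..i'}"
        then have "Y ^ (i' - i) * Y ^ (d - i') = Y ^ (d - i)" using i' by (simp add: power_add[symmetric])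
        then show "c i' * of_nat (i' choose i) * \<kappa> ^ (i' - i) * X ^ i * (Y ^ (i' - i) * Y ^ (d - i'))
          = c i' * of_nat (i' choose i) * \<kappa> ^ (i' - i) * (X ^ i * Y ^ (d - i))" by simp
      qed
      finally show ?thesis .
    qed
    also have "\<dots> = (\<Sum>i\<le>d. c i' * of_nat (i' choose i) * \<kappa> ^ (i' - i) * (X ^ i * Y ^ (d - i)))"
      using i' by (intro sum.mono_neutral_left) auto
    finally show "c i' * (\<Sum>i\<le>i'. of_nat (i' choose i) * X ^ i * (\<kappa> * Y) ^ (i' - i)) * Y ^ (d - i')
        = (\<Sum>i\<le>d. c i' * of_nat (i' choose i) * \<kappa> ^ (i' - i) * (X ^ i * Y ^ (d - i)))" .
  qed
  also have "\<dots> = binform d (shiftc d \<kappa> c) X Y"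
    unfolding binform_def shiftc_def by (simp add: sum_distrib_left sum_distrib_right mult_ac) (rule sum.swap)
  finally show ?thesis by simp
qed

lemma pf_shiftc: "i < d + 1 \<Longrightarrow> (\<lambda>c. shiftc d \<kappa> c i) \<in> polyfun (d + 1)"
  unfolding shiftc_def by (intro pf_sum pf_mult pf_var) auto

lemma rep_shift:
  assumes "waring_rep d r \<alpha> (\<lambda>j. \<alpha> j * \<kappa> + \<beta> j) c' t s1 s2"
    and "\<And>X Y. binform d c' X Y = binform d c (X + \<kappa> * Y) Y"
  shows "waring_rep d r \<alpha> \<beta> c t s1 (\<lambda>k. s2 k - \<kappa> * s1 k)"
  unfolding waring_rep_def
proof (intro allI)
  fix x y
  have "binform d c x y = binform d c' (x - \<kappa> * y) y" using assms(2)[of "x - \<kappa> * y" y] by simp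
  also have "\<dots> = (\<Sum>j = 1..d + 1 - 2 * r. t j * (\<alpha> j * (x - \<kappa> * y) + (\<alpha> j * \<kappa> + \<beta> j) * y) ^ d) +
        (\<Sum>k = 1..r. (s1 k * (x - \<kappa> * y) + s2 k * y) ^ d)"
    using assms(1) unfolding waring_rep_def by blast
  also have "\<dots> = (\<Sum>j = 1..d + 1 - 2 * r. t j * (\<alpha> j * x + \<beta> j * y) ^ d) +
        (\<Sum>k = 1..r. (s1 k * x + (s2 k - \<kappa> * s1 k) * y) ^ d)"
    by (simp add: algebra_simps)
  finally show "binform d c x y = (\<Sum>j = 1..d + 1 - 2 * r. t j * (\<alpha> j * x + \<beta> j * y) ^ d) +
        (\<Sum>k = 1..r. (s1 k * x + (s2 k - \<kappa> * s1 k) * y) ^ d)" .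
qed

lemma rep_unshift:
  assumes "waring_rep d r \<alpha> \<beta> c t s1 s2"
    and "\<And>X Y. binform d c' X Y = binform d c (X + \<kappa> * Y) Y"
  shows "waring_rep d r \<alpha> (\<lambda>j. \<alpha> j * \<kappa> + \<beta> j) c' t s1 (\<lambda>k. s2 k + \<kappa> * s1 k)"
  unfolding waring_rep_def
proof (intro allI)
  fix x y
  have "binform d c' x y = binform d c (x + \<kappa> * y) y" using assms(2) by simp
  also have "\<dots> = (\<Sum>j = 1..d + 1 - 2 * r. t j * (\<alpha> j * (x + \<kappa> * y) + \<beta> j * y) ^ d) +
        (\<Sum>k = 1..r. (s1 k * (x + \<kappa> * y) + s2 k * y) ^ d)"
    using assms(1) unfolding waring_rep_def by blast
  also have "\<dots> = (\<Sum>j = 1..d + 1 - 2 * r. t j * (\<alpha> j * x + (\<alpha> j * \<kappa> + \<beta> j) * y) ^ d) +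
        (\<Sum>k = 1..r. (s1 k * x + (s2 k + \<kappa> * s1 k) * y) ^ d)"
    by (simp add: algebra_simps)
  finally show "binform d c' x y = (\<Sum>j = 1..d + 1 - 2 * r. t j * (\<alpha> j * x + (\<alpha> j * \<kappa> + \<beta> j) * y) ^ d) +
        (\<Sum>k = 1..r. (s1 k * x + (s2 k + \<kappa> * s1 k) * y) ^ d)" .
qed



theorem corollary4p1:
  fixes d r :: nat and \<alpha> \<beta> :: "nat \<Rightarrow> complex"
  assumes "d \<ge> 1" and "2 * r \<le> d + 1"
    and "\<forall>j\<in>{1..d + 1 - 2 * r}. (\<alpha> j, \<beta> j) \<noteq> (0, 0)"
    and "\<forall>i\<in>{1..d + 1 - 2 * r}. \<forall>j\<in>{1..d + 1 - 2 * r}.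
           i \<noteq> j \<longrightarrow> \<not> proportional (\<alpha> i, \<beta> i) (\<alpha> j, \<beta> j)"
  shows "general_binform d (\<lambda>c.
           \<exists>t s1 s2. waring_rep d r \<alpha> \<beta> c t s1 s2 \<and>
             (\<forall>t' s1' s2'. waring_rep d r \<alpha> \<beta> c t' s1' s2' \<longrightarrow>
                (\<forall>j\<in>{1..d + 1 - 2 * r}. t' j = t j) \<and>
                (\<exists>\<sigma> \<zeta>. bij_betw \<sigma> {1..r} {1..r} \<and>
                   (\<forall>k\<in>{1..r}. \<zeta> k ^ d = 1 \<and>
                      s1' k = \<zeta> k * s1 (\<sigma> k) \<and> s2' k = \<zeta> k * s2 (\<sigma> k)))))"
proof -
  let ?m = "d + 1 - 2 * r"
  obtain \<kappa> :: complex where \<kappa>: "\<kappa> \<notin> (\<lambda>j. - \<beta> j / \<alpha> j) ` {1..?m}"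
    using ex_new_if_finite[OF infinite_UNIV_char_0] by blast
  define \<beta>' where "\<beta>' j = \<alpha> j * \<kappa> + \<beta> j" for j
  have bnz: "\<beta>' j \<noteq> 0" if j: "j \<in> {1..?m}" for j
  proof
    assume e: "\<beta>' j = 0"
    show False
    proof (cases "\<alpha> j = 0")
      case True then show False using e assms(3) j unfolding \<beta>'_def by auto
    next
      case False
      then have "\<kappa> = - \<beta> j / \<alpha> j" using e unfolding \<beta>'_def by (simp add: field_simps add_eq_0_iff)
      then show False using \<kappa> j by auto
    qed
  qed
  have zinj: "inj_on (\<lambda>j. \<alpha> j / \<beta>' j) {1..?m}"
  proof (rule inj_onI)
    fix i j assume i: "i \<in> {1..?m}" and j: "j \<in> {1..?m}" and e: "\<alpha> i / \<beta>' i = \<alpha> j / \<beta>' j"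
    show "i = j"
    proof (rule ccontr)
      assume ij: "i \<noteq> j"
      have "\<alpha> i * \<beta>' j = \<alpha> j * \<beta>' i" using e bnz[OF i] bnz[OF j] by (simp add: field_simps)
      then have cr: "\<alpha> i * \<beta> j = \<alpha> j * \<beta> i" unfolding \<beta>'_def by (simp add: algebra_simps)
      have "proportional (\<alpha> i, \<beta> i) (\<alpha> j, \<beta> j)"
      proof (cases "\<alpha> j = 0")
        case True
        then have bj: "\<beta> j \<noteq> 0" using assms(3) j by auto
        then have "\<alpha> i = 0" using cr True by simp
        then show ?thesis unfolding proportional_def using True bj
          by (intro disjI1 exI[of _ "\<beta> i / \<beta> j"]) simp
      next
        case False
        then show ?thesis unfolding proportional_def using cr
          by (intro disjI1 exI[of _ "\<alpha> i / \<alpha> j"]) (simp add: field_simps)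
      qed
      then show False using assms(4) i j ij by blast
    qed
  qed
  have ws: "wsetup d r \<alpha> \<beta>'" by (unfold_locales) (use assms(1,2) bnz zinj in auto)
  note M = wsetup.main_loc[OF ws]
  obtain F' where F': "F' \<in> polyfun (d + 1)" "\<exists>c. F' c \<noteq> 0"
    and P': "\<And>c. F' c \<noteq> 0 \<Longrightarrow> \<exists>t s1 s2. waring_rep d r \<alpha> \<beta>' c t s1 s2 \<and>
             (\<forall>t' s1' s2'. waring_rep d r \<alpha> \<beta>' c t' s1' s2' \<longrightarrow>
                (\<forall>j\<in>{1..?m}. t' j = t j) \<and>
                (\<exists>\<sigma> \<zeta>. bij_betw \<sigma> {1..r} {1..r} \<and>
                   (\<forall>k\<in>{1..r}. \<zeta> k ^ d = 1 \<and>
                      s1' k = \<zeta> k * s1 (\<sigma> k) \<and> s2' k = \<zeta> k * s2 (\<sigma> k))))"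
    using M unfolding general_binform_def by blast
  obtain c0' where c0': "F' c0' \<noteq> 0" using F'(2) by blast
  define F where "F c = F' (shiftc d \<kappa> c)" for c
  have Fpf: "F \<in> polyfun (d + 1)" unfolding F_def[abs_def] by (rule pf_comp[OF F'(1) pf_shiftc])
  have "binform d (shiftc d \<kappa> (shiftc d (- \<kappa>) c0')) X Y = binform d c0' X Y" for X Y
    by (simp add: shiftc_binform)
  then have "shiftc d \<kappa> (shiftc d (- \<kappa>) c0') i = c0' i" if "i < d + 1" for i
    using binform_eq_iff that by (metis less_Suc_eq_le Suc_eq_plus1)
  then have "F (shiftc d (- \<kappa>) c0') = F' c0'" unfolding F_def by (intro pf_local[OF F'(1)]) auto
  then have Fw: "\<exists>c. F c \<noteq> 0" using c0' by metis
  have bd: "\<beta>' = (\<lambda>j. \<alpha> j * \<kappa> + \<beta> j)" unfolding \<beta>'_def by simp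
  have propP: "\<exists>t s1 s2. waring_rep d r \<alpha> \<beta> c t s1 s2 \<and>
             (\<forall>t' s1' s2'. waring_rep d r \<alpha> \<beta> c t' s1' s2' \<longrightarrow>
                (\<forall>j\<in>{1..?m}. t' j = t j) \<and>
                (\<exists>\<sigma> \<zeta>. bij_betw \<sigma> {1..r} {1..r} \<and>
                   (\<forall>k\<in>{1..r}. \<zeta> k ^ d = 1 \<and>
                      s1' k = \<zeta> k * s1 (\<sigma> k) \<and> s2' k = \<zeta> k * s2 (\<sigma> k))))"
    if Fc: "F c \<noteq> 0" for c
  proof -
    define c' where "c' = shiftc d \<kappa> c"
    have bf: "\<And>X Y. binform d c' X Y = binform d c (X + \<kappa> * Y) Y" unfolding c'_def by (rule shiftc_binform)
    obtain t s1 s2 where rep: "waring_rep d r \<alpha> \<beta>' c' t s1 s2"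
      and un: "\<forall>t' s1' s2'. waring_rep d r \<alpha> \<beta>' c' t' s1' s2' \<longrightarrow>
                (\<forall>j\<in>{1..?m}. t' j = t j) \<and>
                (\<exists>\<sigma> \<zeta>. bij_betw \<sigma> {1..r} {1..r} \<and>
                   (\<forall>k\<in>{1..r}. \<zeta> k ^ d = 1 \<and>
                      s1' k = \<zeta> k * s1 (\<sigma> k) \<and> s2' k = \<zeta> k * s2 (\<sigma> k)))"
      using P'[of c'] Fc unfolding F_def c'_def by blast
    have rep0: "waring_rep d r \<alpha> \<beta> c t s1 (\<lambda>k. s2 k - \<kappa> * s1 k)"
      by (rule rep_shift[OF rep[unfolded bd] bf])
    show ?thesis
    proof (rule exI[of _ t], rule exI[of _ s1], rule exI[of _ "\<lambda>k. s2 k - \<kappa> * s1 k"], intro conjI allI impI)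
      show "waring_rep d r \<alpha> \<beta> c t s1 (\<lambda>k. s2 k - \<kappa> * s1 k)" by (rule rep0)
      fix t' s1' s2' assume r': "waring_rep d r \<alpha> \<beta> c t' s1' s2'"
      have r'': "waring_rep d r \<alpha> \<beta>' c' t' s1' (\<lambda>k. s2' k + \<kappa> * s1' k)"
        unfolding bd by (rule rep_unshift[OF r' bf])
      then have U: "(\<forall>j\<in>{1..?m}. t' j = t j) \<and>
                (\<exists>\<sigma> \<zeta>. bij_betw \<sigma> {1..r} {1..r} \<and>
                   (\<forall>k\<in>{1..r}. \<zeta> k ^ d = 1 \<and>
                      s1' k = \<zeta> k * s1 (\<sigma> k) \<and> s2' k + \<kappa> * s1' k = \<zeta> k * s2 (\<sigma> k)))"
        using un by blast
      then show "\<forall>j\<in>{1..?m}. t' j = t j" by blast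
      from U obtain \<sigma> \<zeta> where S: "bij_betw \<sigma> {1..r} {1..r}"
        and Z: "\<forall>k\<in>{1..r}. \<zeta> k ^ d = 1 \<and> s1' k = \<zeta> k * s1 (\<sigma> k) \<and> s2' k + \<kappa> * s1' k = \<zeta> k * s2 (\<sigma> k)"
        by blast
      have "\<forall>k\<in>{1..r}. \<zeta> k ^ d = 1 \<and> s1' k = \<zeta> k * s1 (\<sigma> k) \<and> s2' k = \<zeta> k * (s2 (\<sigma> k) - \<kappa> * s1 (\<sigma> k))"
      proof
        fix k assume k: "k \<in> {1..r}"
        have hk: "\<zeta> k ^ d = 1 \<and> s1' k = \<zeta> k * s1 (\<sigma> k) \<and> s2' k + \<kappa> * s1' k = \<zeta> k * s2 (\<sigma> k)"
          using Z k by blast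
        then have h: "\<zeta> k ^ d = 1" "s1' k = \<zeta> k * s1 (\<sigma> k)" "s2' k + \<kappa> * s1' k = \<zeta> k * s2 (\<sigma> k)"
          by blast+
        have "s2' k = \<zeta> k * s2 (\<sigma> k) - \<kappa> * s1' k" using h(3) by (simp add: eq_diff_eq)
        also have "\<dots> = \<zeta> k * (s2 (\<sigma> k) - \<kappa> * s1 (\<sigma> k))"
          unfolding h(2) by (simp add: right_diff_distrib mult.left_commute)
        finally have "s2' k = \<zeta> k * (s2 (\<sigma> k) - \<kappa> * s1 (\<sigma> k))" .
        then show "\<zeta> k ^ d = 1 \<and> s1' k = \<zeta> k * s1 (\<sigma> k) \<and> s2' k = \<zeta> k * (s2 (\<sigma> k) - \<kappa> * s1 (\<sigma> k))"
          using h by simp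
      qed
      then show "\<exists>\<sigma> \<zeta>. bij_betw \<sigma> {1..r} {1..r} \<and>
                   (\<forall>k\<in>{1..r}. \<zeta> k ^ d = 1 \<and>
                      s1' k = \<zeta> k * s1 (\<sigma> k) \<and> s2' k = \<zeta> k * (s2 (\<sigma> k) - \<kappa> * s1 (\<sigma> k)))"
        using S by blast
    qed
  qed
  show ?thesis unfolding general_binform_def using Fpf Fw propP by blast
qed


end
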